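(* Let $\varepsilon>0$ and let $f(x,t,n,p,q,r)$ be a continuous real function. Consider, for $t_0\ge0$, the problem $$-\varepsilon u_{xxt}+u_{tt}-u_{xx}=f(x,t,u,u_x,u_{xx},u_t),\quad x\in(0,1),\ t>t_0,\qquad u(0,t)=u(1,t)=0,$$ with $u(x,t_0)=u_0(x)$, $u_t(x,t_0)=u_1(x)$, where $u_0(0)=u_0(1)=u_1(0)=u_1(1)=0$. Assume that for every $t\ge0$ and every $(\varphi,\psi)\in\Gamma$ $$\Big(\frac{\varepsilon}{2}+\frac{2}{\varepsilon}\Big)\int_0^1 f(x,t,\varphi,\varphi_x,\varphi_{xx},\psi)^2dx\le g(t)\,c_1^2\,d^2(\varphi,\psi)+\tilde g_1\big(t,d^2(\varphi,\psi)\big)+\tilde g_2\big(t,d^2(\varphi,\psi)\big),$$ where $g:[0,\infty)\to[0,\infty)$ and $\tilde g_1,\tilde g_2:[0,\infty)\times(0,\infty)\to[0,\infty)$ are continuous functions, each $\tilde g_i$ non-decreasing in its second argument, such that: (i) there is $\sigma>0$ with $\int_{t_0}^t g(\tau)\,d\tau-p(t-t_0)\le\sigma$ for all $t\ge t_0\ge 0$; (ii) there are constants $\chi\in[0,1]$, $\kappa\in[0,1]$, $q\ge 0$ (with $q<p$ if $\chi=1$) and $M>0$ such that $\left|\frac{\int_0^t g(\tau)d\tau}{1+t^{\chi}}-q\right|<\frac{M}{1+t^{\kappa}}$ for all $t\ge0$; (iii) for every $\eta>0$, $\lim_{t\to+\infty}\tilde g_1(t,\eta)e^{\xi(t^{\chi}-t^{\kappa})}=0$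 and $\int_0^\infty \tilde g_2(\tau,\eta)e^{\xi(\tau^{\chi}-\tau^{\kappa})}d\tau<+\infty$, where $\xi$ is some positive constant if $\chi>\kappa$ and $\xi=0$ if $\chi\le\kappa$. Then the solutions of this problem are eventually uniformly bounded, and the origin is eventually quasi-uniform-asymptotically stable in the large, both with respect to the distance $d$.
   Context: $\omega_1:=\frac{\pi^4}{1+\pi^4}$, $\omega_2:=\frac{\pi^4}{1+\pi^2+\pi^4}$, $c_1^2:=\min\{\varepsilon^2\omega_1/8,1/4\}$, $c_2^2:=\max\{\varepsilon(1+\varepsilon)/2,(2+\varepsilon)/2\}$, $c_3^2:=\frac{\omega_2}{2}\varepsilon$, $p:=c_3^2/c_2^2$. $\Gamma:=\{(\varphi,\psi):\varphi\in C^2([0,1]),\ \psi\in C([0,1]),\ \varphi(0)=\varphi(1)=\psi(0)=\psi(1)=0\}$ and $d^2(\varphi,\psi):=\int_0^1(\varphi^2+\varphi_x^2+\varphi_{xx}^2+\psi^2)dx$; for a solution $u$ write $d(t):=d(u(\cdot,t),u_t(\cdot,t))$ (solutions are considered as defined for all $t\ge t_0$). Eventually uniformly bounded: for every $\alpha>0$ there exist $s(\alpha)\ge0$ and $\beta(\alpha)>0$ such that $t_0\ge s(\alpha)$ and $d(u_0,u_1)\le\alpha$ imply $d(t)<\beta(\alpha)$ for all $t\ge t_0$. Origin eventually quasi-uniform-asymptotically stable in the large: for every $\rho,\alpha>0$ there exist $s(\alpha)\ge0$ and $\hat T(\rho,\alpha)>0$ such that $d(u_0,u_1)\le\alpha$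 and $t_0\ge s(\alpha)$ imply $d(t)<\rho$ for all $t\ge t_0+\hat T$. *)

theory Defs
  imports "HOL-Analysis.Analysis"
begin

definition omega1 :: real where "omega1 = pi^4 / (1 + pi^4)"
definition omega2 :: real where "omega2 = pi^4 / (1 + pi^2 + pi^4)"

definition c1sq :: "real \<Rightarrow> real" where
  "c1sq \<epsilon> = min (\<epsilon>^2 * omega1 / 8) (1/4)"
definition c2sq :: "real \<Rightarrow> real" where
  "c2sq \<epsilon> = max (\<epsilon> * (1 + \<epsilon>) / 2) ((2 + \<epsilon>) / 2)"
definition c3sq :: "real \<Rightarrow> real" where
  "c3sq \<epsilon> = omega2 / 2 * \<epsilon>"
definition pconst :: "real \<Rightarrow> real" where
  "pconst \<epsilon> = c3sq \<epsilon> / c2sq \<epsilon>"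

text \<open>Real power t^a for t >= 0 with the convention 0^0 = 1
  (Isabelle's powr has 0 powr 0 = 0).\<close>
definition tpow :: "real \<Rightarrow> real \<Rightarrow> real" where
  "tpow t a = (if t = 0 then (if a = 0 then 1 else 0) else t powr a)"

text \<open>Membership in Gamma, with the derivatives phi', phi'' given explicitly
  (one-sided at the endpoints of [0,1]).\<close>
definition in_Gamma ::
  "(real \<Rightarrow> real) \<Rightarrow> (real \<Rightarrow> real) \<Rightarrow> (real \<Rightarrow> real) \<Rightarrow> (real \<Rightarrow> real) \<Rightarrow> bool" where
  "in_Gamma \<phi> \<phi>' \<phi>'' \<psi> \<longleftrightarrow>
     (\<forall>x\<in>{0..1}. (\<phi> has_real_derivative \<phi>' x) (at x within {0..1})) \<and>
     (\<forall>x\<in>{0..1}. (\<phi>' has_real_derivative \<phi>'' x) (at x within {0..1})) \<and>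
     continuous_on {0..1} \<phi>'' \<and> continuous_on {0..1} \<psi> \<and>
     \<phi> 0 = 0 \<and> \<phi> 1 = 0 \<and> \<psi> 0 = 0 \<and> \<psi> 1 = 0"

definition dsq ::
  "(real \<Rightarrow> real) \<Rightarrow> (real \<Rightarrow> real) \<Rightarrow> (real \<Rightarrow> real) \<Rightarrow> (real \<Rightarrow> real) \<Rightarrow> real" where
  "dsq \<phi> \<phi>' \<phi>'' \<psi> = integral {0..1} (\<lambda>x. (\<phi> x)^2 + (\<phi>' x)^2 + (\<phi>'' x)^2 + (\<psi> x)^2)"

definition is_solution ::
  "real \<Rightarrow> (real \<Rightarrow> real \<Rightarrow> real \<Rightarrow> real \<Rightarrow> real \<Rightarrow> real \<Rightarrow> real) \<Rightarrow> real \<Rightarrow>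
   (real \<Rightarrow> real \<Rightarrow> real) \<Rightarrow> (real \<Rightarrow> real \<Rightarrow> real) \<Rightarrow> (real \<Rightarrow> real \<Rightarrow> real) \<Rightarrow>
   (real \<Rightarrow> real \<Rightarrow> real) \<Rightarrow> (real \<Rightarrow> real \<Rightarrow> real) \<Rightarrow> (real \<Rightarrow> real \<Rightarrow> real) \<Rightarrow>
   (real \<Rightarrow> real \<Rightarrow> real) \<Rightarrow> bool" where
  "is_solution \<epsilon> f t0 u ux uxx ut uxt uxxt utt \<longleftrightarrow>
     (\<forall>w \<in> {u, ux, uxx, ut, uxt, uxxt, utt}.
        continuous_on ({0..1} \<times> {t0..}) (\<lambda>(x, t). w x t)) \<and>
     (\<forall>t\<ge>t0. \<forall>x\<in>{0..1}.
        ((\<lambda>y. u y t) has_real_derivative ux x t) (at x within {0..1}) \<and>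
        ((\<lambda>y. ux y t) has_real_derivative uxx x t) (at x within {0..1}) \<and>
        ((\<lambda>y. ut y t) has_real_derivative uxt x t) (at x within {0..1}) \<and>
        ((\<lambda>y. uxt y t) has_real_derivative uxxt x t) (at x within {0..1}) \<and>
        ((\<lambda>s. u x s) has_real_derivative ut x t) (at t within {t0..}) \<and>
        ((\<lambda>s. ux x s) has_real_derivative uxt x t) (at t within {t0..}) \<and>
        ((\<lambda>s. uxx x s) has_real_derivative uxxt x t) (at t within {t0..}) \<and>
        ((\<lambda>s. ut x s) has_real_derivative utt x t) (at t within {t0..})) \<and>
     (\<forall>t\<ge>t0. u 0 t = 0 \<and> u 1 t = 0) \<and>
     (\<forall>x\<in>{0<..<1}. \<forall>t>t0.
        - \<epsilon> * uxxt x t + utt x t - uxx x t = f x t (u x t) (ux x t) (uxx x t) (ut x t))"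

definition dsol ::
  "(real \<Rightarrow> real \<Rightarrow> real) \<Rightarrow> (real \<Rightarrow> real \<Rightarrow> real) \<Rightarrow> (real \<Rightarrow> real \<Rightarrow> real) \<Rightarrow>
   (real \<Rightarrow> real \<Rightarrow> real) \<Rightarrow> real \<Rightarrow> real" where
  "dsol u ux uxx ut t = sqrt (dsq (\<lambda>x. u x t) (\<lambda>x. ux x t) (\<lambda>x. uxx x t) (\<lambda>x. ut x t))"

definition eventually_uniformly_bounded ::
  "real \<Rightarrow> (real \<Rightarrow> real \<Rightarrow> real \<Rightarrow> real \<Rightarrow> real \<Rightarrow> real \<Rightarrow> real) \<Rightarrow> bool" where
  "eventually_uniformly_bounded \<epsilon> f \<longleftrightarrow>
     (\<forall>\<alpha>>0. \<exists>s\<ge>0. \<exists>\<beta>>0. \<forall>t0 u ux uxx ut uxt uxxt utt.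
        t0 \<ge> s \<longrightarrow> is_solution \<epsilon> f t0 u ux uxx ut uxt uxxt utt \<longrightarrow>
        dsol u ux uxx ut t0 \<le> \<alpha> \<longrightarrow> (\<forall>t\<ge>t0. dsol u ux uxx ut t < \<beta>))"

definition eventually_quasi_uniform_asympt_stable_large ::
  "real \<Rightarrow> (real \<Rightarrow> real \<Rightarrow> real \<Rightarrow> real \<Rightarrow> real \<Rightarrow> real \<Rightarrow> real) \<Rightarrow> bool" where
  "eventually_quasi_uniform_asympt_stable_large \<epsilon> f \<longleftrightarrow>
     (\<forall>\<alpha>>0. \<exists>s\<ge>0. \<forall>\<rho>>0. \<exists>T>0. \<forall>t0 u ux uxx ut uxt uxxt utt.
        t0 \<ge> s \<longrightarrow> is_solution \<epsilon> f t0 u ux uxx ut uxt uxxt utt \<longrightarrow>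
        dsol u ux uxx ut t0 \<le> \<alpha> \<longrightarrow> (\<forall>t\<ge>t0 + T. dsol u ux uxx ut t < \<rho>))"

end

theory Submission imports Defs begin


lemma cs_ftc:
  fixes \<phi> \<phi>' :: "real \<Rightarrow> real"
  assumes ab: "a < b"
    and d: "\<And>x. x \<in> {a..b} \<Longrightarrow> (\<phi> has_real_derivative \<phi>' x) (at x within {a..b})"
    and c: "continuous_on {a..b} \<phi>'"
  shows "(\<phi> b - \<phi> a)^2 \<le> (b - a) * integral {a..b} (\<lambda>s. (\<phi>' s)^2)"
proof -
  define m where "m = (\<phi> b - \<phi> a)/(b-a)"
  define J where "J = integral {a..b} (\<lambda>s. (\<phi>' s)^2)"
  have I1: "(\<phi>' has_integral (\<phi> b - \<phi> a)) {a..b}"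
    using fundamental_theorem_of_calculus[of a b \<phi> \<phi>'] ab d
    by (auto simp: has_real_derivative_iff_has_vector_derivative)
  have I2: "((\<lambda>s. (\<phi>' s)^2) has_integral J) {a..b}"
    unfolding J_def
    by (intro integrable_integral integrable_continuous_interval continuous_intros c)
  have I3: "((\<lambda>s. m^2) has_integral (b-a) * m^2) {a..b}"
    using has_integral_const_real[of "m^2" a b] ab by simp
  have "((\<lambda>s. (\<phi>' s)^2 - 2 * m * \<phi>' s + m^2) has_integral (J - 2*m*(\<phi> b - \<phi> a) + (b-a)*m^2)) {a..b}"
    by (intro has_integral_add has_integral_diff I2 I3 has_integral_mult_right I1)
  moreover have "\<And>s. (\<phi>' s)^2 - 2 * m * \<phi>' s + m^2 = (\<phi>' s - m)^2"
    by (simp add: power2_eq_square algebra_simps)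
  ultimately have "((\<lambda>s. (\<phi>' s - m)^2) has_integral (J - 2*m*(\<phi> b - \<phi> a) + (b-a)*m^2)) {a..b}"
    by simp
  then have "0 \<le> J - 2*m*(\<phi> b - \<phi> a) + (b-a)*m^2"
    by (rule has_integral_nonneg) simp
  moreover have "\<phi> b - \<phi> a = m * (b - a)" using ab by (simp add: m_def)
  ultimately have "0 \<le> J - (b-a)*m^2" by (simp add: power2_eq_square algebra_simps)
  then have "(b-a)*((b-a)*m^2) \<le> (b-a)*J" using ab by (intro mult_left_mono) auto
  moreover have "(\<phi> b - \<phi> a)^2 = (b-a)*((b-a)*m^2)"
    unfolding \<open>\<phi> b - \<phi> a = m * (b - a)\<close> by (simp add: power2_eq_square)
  ultimately show ?thesis by (simp add: J_def)
qed

lemma integral_x_half: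
  "integral {0..1/2} (\<lambda>x::real. x * c) = c / 8"
proof -
  have "((\<lambda>x::real. x * c) has_integral ((1/2)^2/2 * c - 0^2/2*c)) {0..1/2}"
    by (rule fundamental_theorem_of_calculus) (auto intro!: derivative_eq_intros simp: has_real_derivative_iff_has_vector_derivative[symmetric])
  then show ?thesis by (simp add: integral_unique power2_eq_square)
qed

lemma integral_1mx_half:
  "integral {1/2..1} (\<lambda>x::real. (1 - x) * c) = c / 8"
proof -
  have "((\<lambda>x::real. (1 - x) * c) has_integral ((\<lambda>x. -((1-x)^2)/2*c) 1 - (\<lambda>x. -((1-x)^2)/2*c) (1/2))) {1/2..1}"
    by (rule fundamental_theorem_of_calculus) (auto intro!: derivative_eq_intros simp: has_real_derivative_iff_has_vector_derivative[symmetric] field_simps)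
  then have "((\<lambda>x::real. (1 - x) * c) has_integral c/8) {1/2..1}" by (simp add: power2_eq_square)
  then show ?thesis by (rule integral_unique)
qed

lemma poincare8:
  fixes \<phi> \<phi>' :: "real \<Rightarrow> real"
  assumes d: "\<And>x. x \<in> {0..1} \<Longrightarrow> (\<phi> has_real_derivative \<phi>' x) (at x within {0..1})"
    and c: "continuous_on {0..1} \<phi>'"
    and z0: "\<phi> 0 = 0" and z1: "\<phi> 1 = 0"
  shows "integral {0..1} (\<lambda>x. (\<phi> x)^2) \<le> integral {0..1} (\<lambda>x. (\<phi>' x)^2) / 8"
proof -
  have cphi: "continuous_on {0..1} \<phi>"
    using d by (meson DERIV_continuous continuous_on_eq_continuous_within)
  have dsub: "\<And>a b x. 0 \<le> a \<Longrightarrow> b \<le> 1 \<Longrightarrow> x \<in> {a..b} \<Longrightarrow> (\<phi> has_real_derivative \<phi>' x) (at x within {a..b})"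
    by (rule has_field_derivative_subset[OF d]) auto
  have csub: "\<And>a b. 0 \<le> a \<Longrightarrow> b \<le> 1 \<Longrightarrow> continuous_on {a..b} \<phi>'"
    by (rule continuous_on_subset[OF c]) auto
  have isq: "\<And>a b. 0 \<le> a \<Longrightarrow> b \<le> 1 \<Longrightarrow> (\<lambda>x. (\<phi>' x)^2) integrable_on {a..b}"
    by (intro integrable_continuous_interval continuous_intros csub)
  have isq0: "\<And>a b. 0 \<le> a \<Longrightarrow> b \<le> 1 \<Longrightarrow> (\<lambda>x. (\<phi> x)^2) integrable_on {a..b}"
    by (intro integrable_continuous_interval continuous_intros continuous_on_subset[OF cphi]) auto
  define J1 where "J1 = integral {0..1/2} (\<lambda>x. (\<phi>' x)^2)"
  define J2 where "J2 = integral {1/2..1} (\<lambda>x. (\<phi>' x)^2)"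
  have L: "(\<phi> x)^2 \<le> x * J1" if x: "x \<in> {0..1/2}" for x
  proof (cases "x = 0")
    case True then show ?thesis by (simp add: z0)
  next
    case False
    then have "(\<phi> x - \<phi> 0)^2 \<le> (x - 0) * integral {0..x} (\<lambda>s. (\<phi>' s)^2)"
      using x by (intro cs_ftc dsub csub) auto
    also have "\<dots> \<le> x * J1" unfolding J1_def diff_zero
      using x by (intro mult_left_mono integral_subset_le isq) auto
    finally show ?thesis by (simp add: z0)
  qed
  have R: "(\<phi> x)^2 \<le> (1 - x) * J2" if x: "x \<in> {1/2..1}" for x
  proof (cases "x = 1")
    case True then show ?thesis by (simp add: z1)
  next
    case False
    then have "(\<phi> 1 - \<phi> x)^2 \<le> (1 - x) * integral {x..1} (\<lambda>s. (\<phi>' s)^2)"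
      using x by (intro cs_ftc dsub csub) auto
    also have "\<dots> \<le> (1 - x) * J2" unfolding J2_def
      using x by (intro mult_left_mono integral_subset_le isq) auto
    finally show ?thesis by (simp add: z1)
  qed
  have "integral {0..1/2} (\<lambda>x. (\<phi> x)^2) \<le> integral {0..1/2} (\<lambda>x. x * J1)"
    by (intro integral_le isq0 L integrable_continuous_interval continuous_intros) auto
  also have "\<dots> = J1 / 8" by (rule integral_x_half)
  finally have h1: "integral {0..1/2} (\<lambda>x. (\<phi> x)^2) \<le> J1 / 8" .
  have "integral {1/2..1} (\<lambda>x. (\<phi> x)^2) \<le> integral {1/2..1} (\<lambda>x. (1 - x) * J2)"
    by (intro integral_le isq0 R integrable_continuous_interval continuous_intros) auto
  also have "\<dots> = J2 / 8" by (rule integral_1mx_half)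
  finally have h2: "integral {1/2..1} (\<lambda>x. (\<phi> x)^2) \<le> J2 / 8" .
  have "integral {0..1} (\<lambda>x. (\<phi> x)^2) = integral {0..1/2} (\<lambda>x. (\<phi> x)^2) + integral {1/2..1} (\<lambda>x. (\<phi> x)^2)"
    by (rule Henstock_Kurzweil_Integration.integral_combine[symmetric]) (auto intro: isq0)
  moreover have "integral {0..1} (\<lambda>x. (\<phi>' x)^2) = J1 + J2" unfolding J1_def J2_def
    by (rule Henstock_Kurzweil_Integration.integral_combine[symmetric]) (auto intro: isq)
  ultimately show ?thesis using h1 h2 by simp
qed

lemma int_add: "continuous_on {a..b} f \<Longrightarrow> continuous_on {a..b} g \<Longrightarrow>
  integral {a..b} (\<lambda>x. f x + g x) = integral {a..b} f + integral {a..b} (g::real\<Rightarrow>real)"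
  by (intro integral_add integrable_continuous_interval)
lemma int_diff: "continuous_on {a..b} f \<Longrightarrow> continuous_on {a..b} g \<Longrightarrow>
  integral {a..b} (\<lambda>x. f x - g x) = integral {a..b} f - integral {a..b} (g::real\<Rightarrow>real)"
  by (intro integral_diff integrable_continuous_interval)
lemmas int_lin = int_add int_diff integral_mult_right integral_mult_left

lemma int_le: "continuous_on {a..b} f \<Longrightarrow> continuous_on {a..b} g \<Longrightarrow> (\<And>x. x \<in> {a..b} \<Longrightarrow> f x \<le> g x) \<Longrightarrow>
  integral {a..b} f \<le> integral {a..b} (g::real\<Rightarrow>real)"
  by (intro integral_le integrable_continuous_interval)

lemma ftc_prod_zero:
  fixes p p' q q' :: "real \<Rightarrow> real"
  assumes dp: "\<And>x. x \<in> {0..1} \<Longrightarrow> (p has_real_derivative p' x) (at x within {0..1})"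
    and dq: "\<And>x. x \<in> {0..1} \<Longrightarrow> (q has_real_derivative q' x) (at x within {0..1})"
    and b0: "p 0 * q 0 = 0" and b1: "p 1 * q 1 = 0"
  shows "((\<lambda>x. p' x * q x + p x * q' x) has_integral 0) {0..1}"
proof -
  have "((\<lambda>x. p' x * q x + p x * q' x) has_integral (p 1 * q 1 - p 0 * q 0)) {0..1}"
  proof (rule fundamental_theorem_of_calculus)
    fix x :: real assume x: "x \<in> {0..1}"
    show "((\<lambda>x. p x * q x) has_vector_derivative p' x * q x + p x * q' x) (at x within {0..1})"
      unfolding has_real_derivative_iff_has_vector_derivative[symmetric]
      using dp[OF x] dq[OF x] by (auto intro!: derivative_eq_intros)
  qed simp
  then show ?thesis using b0 b1 by simp
qed

lemma int_prod_zero: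
  fixes p p' q q' :: "real \<Rightarrow> real"
  assumes dp: "\<And>x. x \<in> {0..1} \<Longrightarrow> (p has_real_derivative p' x) (at x within {0..1})"
    and dq: "\<And>x. x \<in> {0..1} \<Longrightarrow> (q has_real_derivative q' x) (at x within {0..1})"
    and b0: "p 0 * q 0 = 0" and b1: "p 1 * q 1 = 0"
    and cp': "continuous_on {0..1} p'" and cq': "continuous_on {0..1} q'"
  shows "integral {0..1} (\<lambda>x. p' x * q x) + integral {0..1} (\<lambda>x. p x * q' x) = 0"
proof -
  have cp: "continuous_on {0..1} p" using dp by (meson DERIV_continuous continuous_on_eq_continuous_within)
  have cq: "continuous_on {0..1} q" using dq by (meson DERIV_continuous continuous_on_eq_continuous_within)
  have "integral {0..1} (\<lambda>x. p' x * q x + p x * q' x) = 0"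
    using ftc_prod_zero[OF dp dq b0 b1] by (rule integral_unique)
  then show ?thesis using cp cq cp' cq' by (simp add: int_lin continuous_intros)
qed

lemma deriv_cont:
  "(\<And>x. x \<in> {0..1} \<Longrightarrow> (p has_real_derivative p' x) (at x within {0..1})) \<Longrightarrow> continuous_on {0..1} (p::real\<Rightarrow>real)"
  by (meson DERIV_continuous continuous_on_eq_continuous_within)

lemma A_bounds:
  fixes u ux uxx :: "real \<Rightarrow> real"
  assumes du: "\<And>x. x \<in> {0..1} \<Longrightarrow> (u has_real_derivative ux x) (at x within {0..1})"
    and dux: "\<And>x. x \<in> {0..1} \<Longrightarrow> (ux has_real_derivative uxx x) (at x within {0..1})"
    and cuxx: "continuous_on {0..1} uxx"
    and b0: "u 0 = 0" and b1: "u 1 = 0"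
  shows "integral {0..1} (\<lambda>x. (ux x)^2) \<le> integral {0..1} (\<lambda>x. (uxx x)^2) / 8"
    and "integral {0..1} (\<lambda>x. (u x)^2) \<le> integral {0..1} (\<lambda>x. (uxx x)^2) / 64"
proof -
  have cu: "continuous_on {0..1} u" by (rule deriv_cont[OF du])
  have cux: "continuous_on {0..1} ux" by (rule deriv_cont[OF dux])
  define U where "U = integral {0..1} (\<lambda>x. (u x)^2)"
  define A where "A = integral {0..1} (\<lambda>x. (ux x)^2)"
  define B where "B = integral {0..1} (\<lambda>x. (uxx x)^2)"
  have P: "U \<le> A / 8" unfolding U_def A_def by (rule poincare8[OF du cux b0 b1])
  have "integral {0..1} (\<lambda>x. ux x * ux x) + integral {0..1} (\<lambda>x. u x * uxx x) = 0"
    by (rule int_prod_zero[OF du dux]) (simp_all add: b0 b1 cux cuxx)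
  then have Aid: "A = - integral {0..1} (\<lambda>x. u x * uxx x)"
    unfolding A_def by (simp add: power2_eq_square)
  have "- integral {0..1} (\<lambda>x. u x * uxx x) \<le> integral {0..1} (\<lambda>x. 4 * (u x)^2 + (uxx x)^2 / 16)"
  proof -
    have "integral {0..1} (\<lambda>x. - (u x * uxx x)) \<le> integral {0..1} (\<lambda>x. 4 * (u x)^2 + (uxx x)^2 / 16)"
    proof (rule int_le)
      fix x :: real
      have "0 \<le> (2 * u x + uxx x / 4)^2" by simp
      then show "- (u x * uxx x) \<le> 4 * (u x)^2 + (uxx x)^2 / 16"
        by (simp add: power2_eq_square algebra_simps)
    qed (auto intro!: continuous_intros cu cuxx)
    then show ?thesis using cu cuxx by (simp add: continuous_intros integral_neg integrable_continuous_interval)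
  qed
  also have "\<dots> = 4 * U + B / 16" unfolding U_def B_def
    using cu cuxx by (simp add: int_lin continuous_intros)
  finally have "A \<le> 4 * U + B / 16" using Aid by simp
  then show "A \<le> B / 8" using P by simp
  then show "U \<le> B / 64" using P by simp
qed


lemma omega1_le: "omega1 \<le> 1" "0 < omega1"
proof -
  have p: "0 < pi^4" by simp
  have q: "0 < 1 + pi^4" using p by linarith
  show "omega1 \<le> 1" "0 < omega1" unfolding omega1_def using p q by (auto intro: divide_pos_pos simp: divide_le_eq_1)
qed

lemma c1sq_props: assumes "\<epsilon> > 0" shows "0 < c1sq \<epsilon>" "c1sq \<epsilon> \<le> \<epsilon>^2/8" "c1sq \<epsilon> \<le> 1/4"
proof -
  have "\<epsilon>^2 * omega1 / 8 \<le> \<epsilon>^2 / 8" using omega1_le by (simp add: mult_left_le)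
  moreover have "0 < \<epsilon>^2 * omega1 / 8" using omega1_le assms by simp
  ultimately show "0 < c1sq \<epsilon>" "c1sq \<epsilon> \<le> \<epsilon>^2/8" "c1sq \<epsilon> \<le> 1/4" unfolding c1sq_def by auto
qed

lemma c2sq_props: shows "1 + \<epsilon>/2 \<le> c2sq \<epsilon>" "\<epsilon> * (1 + \<epsilon>) / 2 \<le> c2sq \<epsilon>"
  unfolding c2sq_def by (simp_all add: max_def field_simps)

lemma dsq_expand:
  assumes "continuous_on {0..1} u" "continuous_on {0..1} ux" "continuous_on {0..1} uxx" "continuous_on {0..1} ut"
  shows "dsq u ux uxx ut = integral {0..1} (\<lambda>x. (u x)^2) + integral {0..1} (\<lambda>x. (ux x)^2)
     + integral {0..1} (\<lambda>x. (uxx x)^2) + integral {0..1} (\<lambda>x. (ut x)^2)"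
  unfolding dsq_def using assms by (simp add: int_lin continuous_intros)

lemma int_sq_nonneg: "continuous_on {0..1} (u::real\<Rightarrow>real) \<Longrightarrow> 0 \<le> integral {0..1} (\<lambda>x. (u x)^2)"
  by (rule Henstock_Kurzweil_Integration.integral_nonneg) (auto intro!: integrable_continuous_interval continuous_intros)

definition Vfun :: "real \<Rightarrow> (real \<Rightarrow> real) \<Rightarrow> (real \<Rightarrow> real) \<Rightarrow> (real \<Rightarrow> real) \<Rightarrow> real" where
  "Vfun \<epsilon> ux uxx ut = integral {0..1} (\<lambda>x. (ut x)^2 + (ux x)^2 + \<epsilon>^2/2 * (uxx x)^2 - \<epsilon> * (ut x * uxx x))"

lemma V_lower:
  fixes u ux uxx ut :: "real \<Rightarrow> real"
  assumes eps: "\<epsilon> > 0"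
    and du: "\<And>x. x \<in> {0..1} \<Longrightarrow> (u has_real_derivative ux x) (at x within {0..1})"
    and dux: "\<And>x. x \<in> {0..1} \<Longrightarrow> (ux has_real_derivative uxx x) (at x within {0..1})"
    and cuxx: "continuous_on {0..1} uxx" and cut: "continuous_on {0..1} ut"
    and b0: "u 0 = 0" and b1: "u 1 = 0"
  shows "28/25 * c1sq \<epsilon> * dsq u ux uxx ut \<le> Vfun \<epsilon> ux uxx ut"
proof -
  have cu: "continuous_on {0..1} u" by (rule deriv_cont[OF du])
  have cux: "continuous_on {0..1} ux" by (rule deriv_cont[OF dux])
  define U where "U = integral {0..1} (\<lambda>x. (u x)^2)"
  define A where "A = integral {0..1} (\<lambda>x. (ux x)^2)"
  define B where "B = integral {0..1} (\<lambda>x. (uxx x)^2)"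
  define E where "E = integral {0..1} (\<lambda>x. (ut x)^2)"
  have nn: "0 \<le> U" "0 \<le> A" "0 \<le> B" "0 \<le> E" unfolding U_def A_def B_def E_def
    by (intro int_sq_nonneg cu cux cuxx cut)+
  have UB: "U \<le> B / 64" unfolding U_def B_def by (rule A_bounds(2)[OF du dux cuxx b0 b1])
  have d: "dsq u ux uxx ut = U + A + B + E" unfolding U_def A_def B_def E_def
    by (rule dsq_expand[OF cu cux cuxx cut])
  have "integral {0..1} (\<lambda>x. 3/10 * (ut x)^2 + (ux x)^2 + \<epsilon>^2/7 * (uxx x)^2) \<le> Vfun \<epsilon> ux uxx ut"
    unfolding Vfun_def
  proof (rule int_le)
    fix x :: real
    have "0 \<le> 7/10 * (ut x - 5/7 * \<epsilon> * uxx x)^2" by simp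
    then show "3/10 * (ut x)^2 + (ux x)^2 + \<epsilon>^2/7 * (uxx x)^2 \<le> (ut x)^2 + (ux x)^2 + \<epsilon>^2/2 * (uxx x)^2 - \<epsilon> * (ut x * uxx x)"
      by (simp add: power2_eq_square algebra_simps)
  qed (auto intro!: continuous_intros cux cuxx cut)
  also have "integral {0..1} (\<lambda>x. 3/10 * (ut x)^2 + (ux x)^2 + \<epsilon>^2/7 * (uxx x)^2) = 3/10 * E + A + \<epsilon>^2/7 * B"
    unfolding E_def A_def B_def using cux cuxx cut by (simp add: int_lin continuous_intros)
  finally have V: "3/10 * E + A + \<epsilon>^2/7 * B \<le> Vfun \<epsilon> ux uxx ut" .
  define c where "c = c1sq \<epsilon>"
  have c: "0 < c" "c \<le> \<epsilon>^2/8" "c \<le> 1/4" unfolding c_def using c1sq_props[OF eps] by auto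
  have "c * E \<le> 1/4 * E" using c nn by (intro mult_right_mono) auto
  moreover have "c * A \<le> 1/4 * A" using c nn by (intro mult_right_mono) auto
  moreover have "c * (U + B) \<le> \<epsilon>^2/8 * (65/64 * B)" using c nn UB by (intro mult_mono) auto
  moreover have "0 \<le> \<epsilon>^2 * B" using nn by simp
  moreover have "28/25*c*(U+A+B+E) = 28/25*(c*E) + 28/25*(c*A) + 28/25*(c*(U+B))" by (simp add: algebra_simps)
  moreover have "\<epsilon>^2/8*(65/64*B) = 65/512*(\<epsilon>^2*B)" "\<epsilon>^2/7*B = 1/7*(\<epsilon>^2*B)" by simp_all
  ultimately have "28/25 * c * (U + A + B + E) \<le> 3/10 * E + A + \<epsilon>^2/7 * B"
    using nn by linarith
  then show ?thesis using V d c_def by simp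
qed

lemma V_upper:
  fixes u ux uxx ut :: "real \<Rightarrow> real"
  assumes eps: "\<epsilon> > 0"
    and c: "continuous_on {0..1} u" "continuous_on {0..1} ux" "continuous_on {0..1} uxx" "continuous_on {0..1} ut"
  shows "Vfun \<epsilon> ux uxx ut \<le> c2sq \<epsilon> * dsq u ux uxx ut"
proof -
  define U where "U = integral {0..1} (\<lambda>x. (u x)^2)"
  define A where "A = integral {0..1} (\<lambda>x. (ux x)^2)"
  define B where "B = integral {0..1} (\<lambda>x. (uxx x)^2)"
  define E where "E = integral {0..1} (\<lambda>x. (ut x)^2)"
  have nn: "0 \<le> U" "0 \<le> A" "0 \<le> B" "0 \<le> E" unfolding U_def A_def B_def E_def
    by (intro int_sq_nonneg c)+
  have d: "dsq u ux uxx ut = U + A + B + E" unfolding U_def A_def B_def E_def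
    by (rule dsq_expand[OF c])
  have "Vfun \<epsilon> ux uxx ut \<le> integral {0..1} (\<lambda>x. (1 + \<epsilon>/2) * (ut x)^2 + (ux x)^2 + (\<epsilon>^2/2 + \<epsilon>/2) * (uxx x)^2)"
    unfolding Vfun_def
  proof (rule int_le)
    fix x :: real
    have "0 \<le> \<epsilon>/2 * (ut x + uxx x)^2" using eps by simp
    then show "(ut x)^2 + (ux x)^2 + \<epsilon>^2/2 * (uxx x)^2 - \<epsilon> * (ut x * uxx x) \<le> (1 + \<epsilon>/2) * (ut x)^2 + (ux x)^2 + (\<epsilon>^2/2 + \<epsilon>/2) * (uxx x)^2"
      by (simp add: power2_eq_square algebra_simps)
  qed (auto intro!: continuous_intros c)
  also have "\<dots> = (1 + \<epsilon>/2) * E + A + (\<epsilon>^2/2 + \<epsilon>/2) * B"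
    unfolding E_def A_def B_def using c by (simp add: int_lin continuous_intros)
  also have "\<dots> \<le> c2sq \<epsilon> * E + c2sq \<epsilon> * A + c2sq \<epsilon> * B + c2sq \<epsilon> * U"
  proof -
    have "(1 + \<epsilon>/2) * E \<le> c2sq \<epsilon> * E" using c2sq_props nn by (intro mult_right_mono) auto
    moreover have "1 * A \<le> c2sq \<epsilon> * A" using c2sq_props[of \<epsilon>] nn eps
      by (intro mult_right_mono) auto
    moreover have "(\<epsilon>^2/2 + \<epsilon>/2) * B \<le> c2sq \<epsilon> * B" using c2sq_props[of \<epsilon>] nn
      by (intro mult_right_mono) (auto simp: power2_eq_square algebra_simps)
    moreover have "0 \<le> c2sq \<epsilon> * U" using c2sq_props[of \<epsilon>] nn eps by simp
    ultimately show ?thesis by linarith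
  qed
  finally show ?thesis using d by (simp add: algebra_simps)
qed


definition Dfun :: "real \<Rightarrow> (real \<Rightarrow> real) \<Rightarrow> (real \<Rightarrow> real) \<Rightarrow> (real \<Rightarrow> real) \<Rightarrow> (real \<Rightarrow> real) \<Rightarrow> (real \<Rightarrow> real) \<Rightarrow> (real \<Rightarrow> real) \<Rightarrow> real" where
  "Dfun \<epsilon> ux uxx ut uxt uxxt utt = integral {0..1} (\<lambda>x. 2 * (ut x * utt x) + 2 * (ux x * uxt x)
     + \<epsilon>^2/2 * (2 * (uxx x * uxxt x)) - \<epsilon> * (utt x * uxx x + ut x * uxxt x))"

lemma D_bound:
  fixes u ux uxx ut uxt uxxt utt F :: "real \<Rightarrow> real"
  assumes eps: "\<epsilon> > 0"
    and du: "\<And>x. x \<in> {0..1} \<Longrightarrow> (u has_real_derivative ux x) (at x within {0..1})"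
    and dux: "\<And>x. x \<in> {0..1} \<Longrightarrow> (ux has_real_derivative uxx x) (at x within {0..1})"
    and dut: "\<And>x. x \<in> {0..1} \<Longrightarrow> (ut has_real_derivative uxt x) (at x within {0..1})"
    and duxt: "\<And>x. x \<in> {0..1} \<Longrightarrow> (uxt has_real_derivative uxxt x) (at x within {0..1})"
    and cuxx: "continuous_on {0..1} uxx" and cuxxt: "continuous_on {0..1} uxxt"
    and cutt: "continuous_on {0..1} utt" and cF: "continuous_on {0..1} F"
    and b0: "u 0 = 0" and b1: "u 1 = 0" and bt0: "ut 0 = 0" and bt1: "ut 1 = 0"
    and pde: "\<And>x. x \<in> {0<..<1} \<Longrightarrow> utt x = F x + \<epsilon> * uxxt x + uxx x"
  shows "Dfun \<epsilon> ux uxx ut uxt uxxt utt \<le> (\<epsilon>/2 + 2/\<epsilon>) * integral {0..1} (\<lambda>x. (F x)^2) - 32*\<epsilon>/73 * dsq u ux uxx ut"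
proof -
  have cu: "continuous_on {0..1} u" by (rule deriv_cont[OF du])
  have cux: "continuous_on {0..1} ux" by (rule deriv_cont[OF dux])
  have cut: "continuous_on {0..1} ut" by (rule deriv_cont[OF dut])
  have cuxt: "continuous_on {0..1} uxt" by (rule deriv_cont[OF duxt])
  note cs = cu cux cuxx cut cuxt cuxxt cutt cF
  define U where "U = integral {0..1} (\<lambda>x. (u x)^2)"
  define A where "A = integral {0..1} (\<lambda>x. (ux x)^2)"
  define B where "B = integral {0..1} (\<lambda>x. (uxx x)^2)"
  define E where "E = integral {0..1} (\<lambda>x. (ut x)^2)"
  define X where "X = integral {0..1} (\<lambda>x. (uxt x)^2)"
  define FF where "FF = integral {0..1} (\<lambda>x. (F x)^2)"
  define Y where "Y = integral {0..1} (\<lambda>x. (2 * ut x - \<epsilon> * uxx x) * F x)"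
  define I1 where "I1 = integral {0..1} (\<lambda>x. ut x * uxxt x)"
  define I2 where "I2 = integral {0..1} (\<lambda>x. uxt x * ux x)"
  define I3 where "I3 = integral {0..1} (\<lambda>x. ut x * uxx x)"
  have nn: "0 \<le> U" "0 \<le> A" "0 \<le> B" "0 \<le> E" unfolding U_def A_def B_def E_def
    by (intro int_sq_nonneg cs)+
  have UB: "U \<le> B / 64" unfolding U_def B_def by (rule A_bounds(2)[OF du dux cuxx b0 b1])
  have AB: "A \<le> B / 8" unfolding A_def B_def by (rule A_bounds(1)[OF du dux cuxx b0 b1])
  have EX: "E \<le> X / 8" unfolding E_def X_def by (rule poincare8[OF dut cuxt bt0 bt1])
  have d: "dsq u ux uxx ut = U + A + B + E" unfolding U_def A_def B_def E_def
    by (rule dsq_expand[OF cu cux cuxx cut])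
  have id1: "integral {0..1} (\<lambda>x. uxt x * uxt x) + I1 = 0" unfolding I1_def
    by (rule int_prod_zero[OF dut duxt]) (simp_all add: bt0 bt1 cuxt cuxxt)
  then have id1': "I1 = - X" unfolding X_def by (simp add: power2_eq_square)
  have id2: "I2 + I3 = 0" unfolding I2_def I3_def
    by (rule int_prod_zero[OF dut dux]) (simp_all add: bt0 bt1 cux cuxx cuxt)
  have "Dfun \<epsilon> ux uxx ut uxt uxxt utt = integral {0..1} (\<lambda>x. (2 * ut x - \<epsilon> * uxx x) * F x - \<epsilon> * (uxx x)^2
       + \<epsilon> * (ut x * uxxt x) + 2 * (ut x * uxx x) + 2 * (uxt x * ux x))"
    unfolding Dfun_def
  proof (rule integral_spike[of "{0,1}"])
    fix x :: real assume "x \<in> {0..1} - {0, 1}"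
    then have "x \<in> {0<..<1}" by (auto simp: less_le)
    from pde[OF this] show "(2 * ut x - \<epsilon> * uxx x) * F x - \<epsilon> * (uxx x)^2
       + \<epsilon> * (ut x * uxxt x) + 2 * (ut x * uxx x) + 2 * (uxt x * ux x) =
      2 * (ut x * utt x) + 2 * (ux x * uxt x)
     + \<epsilon>^2/2 * (2 * (uxx x * uxxt x)) - \<epsilon> * (utt x * uxx x + ut x * uxxt x)"
      by (simp add: power2_eq_square algebra_simps)
  qed auto
  also have "\<dots> = Y - \<epsilon> * B + \<epsilon> * I1 + 2 * I3 + 2 * I2"
    unfolding Y_def B_def I1_def I2_def I3_def using cs by (simp add: int_lin continuous_intros)
  finally have D: "Dfun \<epsilon> ux uxx ut uxt uxxt utt = Y - \<epsilon> * B - \<epsilon> * X"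
    using id1' id2 by simp
  have "Y \<le> integral {0..1} (\<lambda>x. (\<epsilon>/2 + 2/\<epsilon>) * (F x)^2 + \<epsilon>/2 * (ut x)^2 + \<epsilon>/2 * (uxx x)^2)"
    unfolding Y_def
  proof (rule int_le)
    fix x :: real
    have "0 \<le> \<epsilon>/2 * (ut x - 2/\<epsilon> * F x)^2" using eps by simp
    moreover have "0 \<le> \<epsilon>/2 * (uxx x + F x)^2" using eps by simp
    ultimately show "(2 * ut x - \<epsilon> * uxx x) * F x \<le> (\<epsilon>/2 + 2/\<epsilon>) * (F x)^2 + \<epsilon>/2 * (ut x)^2 + \<epsilon>/2 * (uxx x)^2"
      using eps by (simp add: power2_eq_square algebra_simps)
  qed (auto intro!: continuous_intros cs)
  also have "\<dots> = (\<epsilon>/2 + 2/\<epsilon>) * FF + \<epsilon>/2 * E + \<epsilon>/2 * B"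
    unfolding FF_def E_def B_def using cs by (simp add: int_lin continuous_intros)
  finally have Y: "Y \<le> (\<epsilon>/2 + 2/\<epsilon>) * FF + \<epsilon>/2 * E + \<epsilon>/2 * B" .
  have "U + A \<le> 9/64 * B" using UB AB by linarith
  then have "32/73 * (U + A) \<le> 32/73 * (9/64 * B)" by (rule mult_left_mono) simp
  then have "E/2 - X - B/2 + 32/73*(U+A+B+E) \<le> 0" using nn EX by (simp add: field_simps)
  then have "\<epsilon> * (E/2 - X - B/2 + 32/73*(U+A+B+E)) \<le> 0" using eps by (simp add: mult_le_0_iff)
  moreover have "\<epsilon> * (E/2 - X - B/2 + 32/73*(U+A+B+E)) = \<epsilon>/2*E - \<epsilon>*X - \<epsilon>/2*B + 32*\<epsilon>/73*(U+A+B+E)"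
    by (simp add: algebra_simps)
  ultimately show ?thesis unfolding d using D Y unfolding FF_def by linarith
qed



lemma deriv_at_interior:
  assumes "(f has_real_derivative D) (at t within {a..b})" "t \<in> {a<..<b}"
  shows "(f has_real_derivative D) (at t)"
  using assms at_within_interior[of t "{a..b}"] interior_atLeastAtMost_real[of a b] by simp

lemma int_exp_decay:
  assumes "a \<le> b" "(\<delta>::real) > 0"
  shows "integral {a..b} (\<lambda>\<tau>. exp (-\<delta> * (b - \<tau>))) \<le> 1 / \<delta>"
proof -
  have "((\<lambda>\<tau>. exp (-\<delta> * (b - \<tau>))) has_integral ((\<lambda>\<tau>. exp (-\<delta> * (b - \<tau>)) / \<delta>) b - (\<lambda>\<tau>. exp (-\<delta> * (b - \<tau>)) / \<delta>) a)) {a..b}"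
    using assms by (intro fundamental_theorem_of_calculus)
      (auto intro!: derivative_eq_intros simp: has_real_derivative_iff_has_vector_derivative[symmetric])
  then have "integral {a..b} (\<lambda>\<tau>. exp (-\<delta> * (b - \<tau>))) = 1/\<delta> - exp (-\<delta> * (b - a)) / \<delta>"
    by (simp add: integral_unique)
  also have "\<dots> \<le> 1/\<delta>" using assms by simp
  finally show ?thesis .
qed

lemma ode_est:
  fixes V k H1 H2 :: "real \<Rightarrow> real"
  assumes ab: "a \<le> b" and dpos: "\<delta> > 0"
    and cV: "continuous_on {a..b} V"
    and dV: "\<And>t. t \<in> {a<..<b} \<Longrightarrow> \<exists>D. (V has_real_derivative D) (at t) \<and> D \<le> k t * V t + H1 t + H2 t"
    and ck: "continuous_on {a..b} k" and cH1: "continuous_on {a..b} H1" and cH2: "continuous_on {a..b} H2"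
    and H1b: "\<And>t. t \<in> {a..b} \<Longrightarrow> 0 \<le> H1 t \<and> H1 t \<le> e1"
    and H2b: "\<And>t. t \<in> {a..b} \<Longrightarrow> 0 \<le> H2 t" and H2i: "integral {a..b} H2 \<le> e2"
    and kb: "\<And>\<tau>. \<tau> \<in> {a..b} \<Longrightarrow> integral {\<tau>..b} k \<le> S - \<delta> * (b - \<tau>)"
    and Va: "0 \<le> V a"
  shows "V b \<le> exp S * (exp (-\<delta> * (b - a)) * V a + e1 / \<delta> + e2)"
proof -
  define \<Phi> where "\<Phi> t = integral {a..t} k" for t
  have dPhi: "(\<Phi> has_real_derivative k t) (at t within {a..b})" if "t \<in> {a..b}" for t
    unfolding \<Phi>_def by (rule integral_has_real_derivative[OF ck that])
  have cPhi: "continuous_on {a..b} \<Phi>"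
    using dPhi by (meson DERIV_continuous continuous_on_eq_continuous_within)
  define G where "G t = exp (- \<Phi> t) * (H1 t + H2 t)" for t
  have cG: "continuous_on {a..b} G" unfolding G_def by (intro continuous_intros cPhi cH1 cH2)
  define \<Psi> where "\<Psi> t = integral {a..t} G" for t
  have dPsi: "(\<Psi> has_real_derivative G t) (at t within {a..b})" if "t \<in> {a..b}" for t
    unfolding \<Psi>_def by (rule integral_has_real_derivative[OF cG that])
  have cPsi: "continuous_on {a..b} \<Psi>"
    using dPsi by (meson DERIV_continuous continuous_on_eq_continuous_within)
  define W where "W t = exp (- \<Phi> t) * V t - \<Psi> t" for t
  have "W b \<le> W a"
  proof (rule DERIV_nonpos_imp_decreasing_open[OF ab])
    fix t assume t: "a < t" "t < b"
    then have tin: "t \<in> {a<..<b}" "t \<in> {a..b}" by auto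
    obtain D where D: "(V has_real_derivative D) (at t)" "D \<le> k t * V t + H1 t + H2 t"
      using dV[OF tin(1)] by blast
    have dP: "(\<Phi> has_real_derivative k t) (at t)" by (rule deriv_at_interior[OF dPhi[OF tin(2)] tin(1)])
    have dS: "(\<Psi> has_real_derivative G t) (at t)" by (rule deriv_at_interior[OF dPsi[OF tin(2)] tin(1)])
    have "(W has_real_derivative (exp (- \<Phi> t) * (- k t) * V t + exp (- \<Phi> t) * D - G t)) (at t)"
      unfolding W_def[abs_def]
      by (auto intro!: derivative_eq_intros dP dS D(1))
    moreover have "exp (- \<Phi> t) * (- k t) * V t + exp (- \<Phi> t) * D - G t \<le> 0"
    proof -
      have "exp (- \<Phi> t) * D \<le> exp (- \<Phi> t) * (k t * V t + H1 t + H2 t)"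
        using D(2) by (intro mult_left_mono) auto
      then show ?thesis unfolding G_def by (simp add: algebra_simps)
    qed
    ultimately show "\<exists>y. (W has_real_derivative y) (at t) \<and> y \<le> 0" by blast
  next
    show "continuous_on {a..b} W" unfolding W_def by (intro continuous_intros cPhi cV cPsi)
  qed
  then have "exp (- \<Phi> b) * V b \<le> V a + \<Psi> b"
    unfolding W_def \<Psi>_def \<Phi>_def by simp
  then have "exp (\<Phi> b) * (exp (- \<Phi> b) * V b) \<le> exp (\<Phi> b) * (V a + \<Psi> b)"
    by (intro mult_left_mono) auto
  then have VB: "V b \<le> exp (\<Phi> b) * V a + exp (\<Phi> b) * \<Psi> b"
    by (simp add: exp_minus field_simps)
  have PhiB: "\<Phi> b \<le> S - \<delta> * (b - a)" using kb[of a] ab unfolding \<Phi>_def by simp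
  have t1: "exp (\<Phi> b) * V a \<le> exp S * (exp (-\<delta> * (b - a)) * V a)"
  proof -
    have "exp (\<Phi> b) \<le> exp S * exp (-\<delta> * (b - a))" using PhiB by (simp add: exp_add[symmetric])
    then show ?thesis using Va by (simp add: mult_right_mono mult.assoc[symmetric])
  qed
  have "exp (\<Phi> b) * \<Psi> b = integral {a..b} (\<lambda>\<tau>. exp (\<Phi> b) * G \<tau>)"
    unfolding \<Psi>_def by (simp add: integral_mult_right)
  also have "\<dots> \<le> integral {a..b} (\<lambda>\<tau>. exp S * e1 * exp (-\<delta> * (b - \<tau>)) + exp S * H2 \<tau>)"
  proof (rule integral_le)
    show "(\<lambda>\<tau>. exp (\<Phi> b) * G \<tau>) integrable_on {a..b}"
      by (intro integrable_continuous_interval continuous_intros cG)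
    show "(\<lambda>\<tau>. exp S * e1 * exp (-\<delta> * (b - \<tau>)) + exp S * H2 \<tau>) integrable_on {a..b}"
      by (intro integrable_continuous_interval continuous_intros cH2)
  next
    fix \<tau> assume tau: "\<tau> \<in> {a..b}"
    have "\<Phi> b = \<Phi> \<tau> + integral {\<tau>..b} k" unfolding \<Phi>_def
      using tau by (intro Henstock_Kurzweil_Integration.integral_combine[symmetric] integrable_continuous_interval ck) auto
    then have "\<Phi> b - \<Phi> \<tau> \<le> S - \<delta> * (b - \<tau>)" using kb[OF tau] by simp
    then have e: "exp (\<Phi> b - \<Phi> \<tau>) \<le> exp S * exp (-\<delta> * (b - \<tau>))" by (simp add: exp_add[symmetric])
    have e2': "exp (-\<delta> * (b - \<tau>)) \<le> 1" using tau dpos by simp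
    have "exp (\<Phi> b) * G \<tau> = exp (\<Phi> b - \<Phi> \<tau>) * H1 \<tau> + exp (\<Phi> b - \<Phi> \<tau>) * H2 \<tau>"
      unfolding G_def by (simp add: exp_diff exp_minus field_simps)
    also have "\<dots> \<le> (exp S * exp (-\<delta> * (b - \<tau>))) * e1 + (exp S * exp (-\<delta> * (b - \<tau>))) * H2 \<tau>"
      using H1b[OF tau] H2b[OF tau] e by (intro add_mono mult_mono) auto
    also have "\<dots> \<le> (exp S * exp (-\<delta> * (b - \<tau>))) * e1 + exp S * H2 \<tau>"
    proof -
      have "(exp S * exp (-\<delta> * (b - \<tau>))) * H2 \<tau> \<le> (exp S * 1) * H2 \<tau>"
        using H2b[OF tau] e2' by (intro mult_right_mono mult_left_mono) auto
      then show ?thesis by simp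
    qed
    finally show "exp (\<Phi> b) * G \<tau> \<le> exp S * e1 * exp (-\<delta> * (b - \<tau>)) + exp S * H2 \<tau>"
      by (simp add: algebra_simps)
  qed
  also have "\<dots> = exp S * e1 * integral {a..b} (\<lambda>\<tau>. exp (-\<delta> * (b - \<tau>))) + exp S * integral {a..b} H2"
    by (subst integral_add) (auto intro!: integrable_continuous_interval continuous_intros cH2)
  also have "\<dots> \<le> exp S * e1 * (1/\<delta>) + exp S * e2"
  proof -
    have e1n: "0 \<le> e1" using H1b[of a] ab by auto
    show ?thesis using int_exp_decay[OF ab dpos] H2i e1n
      by (intro add_mono mult_left_mono) auto
  qed
  finally have t2: "exp (\<Phi> b) * \<Psi> b \<le> exp S * e1 * (1/\<delta>) + exp S * e2" .
  show ?thesis using VB t1 t2 by (simp add: algebra_simps)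
qed



lemma joint_swap:
  assumes "continuous_on ({0..1} \<times> {t0..}) (\<lambda>(x, t). w x t)"
  shows "continuous_on ({t0..} \<times> {0..1}) (\<lambda>p. (w (snd p) (fst p) :: real))"
proof -
  have "continuous_on ({t0..} \<times> {0..1}) (\<lambda>p. (\<lambda>(x, t). w x t) ((\<lambda>p. (snd p, fst p)) p))"
    by (rule continuous_on_compose2[OF assms]) (auto intro!: continuous_intros)
  then show ?thesis by simp
qed

lemma slice_cont:
  assumes "continuous_on ({0..1} \<times> {t0..}) (\<lambda>(x, t). w x t)" "t0 \<le> t"
  shows "continuous_on {0..1} (\<lambda>x. (w x t :: real))"
proof -
  have "continuous_on {0..1} (\<lambda>x. (\<lambda>(x, t). w x t) ((\<lambda>x. (x, t)) x))"
    by (rule continuous_on_compose2[OF assms(1)]) (use assms(2) in \<open>auto intro!: continuous_intros\<close>)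
  then show ?thesis by simp
qed



lemma tail_small:
  fixes h :: "real \<Rightarrow> real"
  assumes hi: "h integrable_on {0..}" and hn: "\<And>t. 0 \<le> t \<Longrightarrow> 0 \<le> h t" and e: "0 < e"
  shows "\<exists>m\<ge>0. \<forall>a b. m \<le> a \<longrightarrow> a \<le> b \<longrightarrow> integral {a..b} h \<le> e"
proof -
  define F where "F b = integral {0..b} h" for b
  have hint: "h integrable_on {a..b}" if "0 \<le> a" for a b
    by (rule integrable_on_subinterval[OF hi]) (use that in auto)
  have Fb: "F b \<le> integral {0..} h" if "0 \<le> b" for b
    unfolding F_def by (rule integral_subset_le) (use hint hi hn in auto)
  have comb: "F b = F a + integral {a..b} h" if "0 \<le> a" "a \<le> b" for a b
    unfolding F_def using that
    by (intro Henstock_Kurzweil_Integration.integral_combine[symmetric] hint) auto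
  have inn: "0 \<le> integral {a..b} h" if "0 \<le> a" for a b
    by (rule Henstock_Kurzweil_Integration.integral_nonneg[OF hint[OF that]]) (use that hn in auto)
  have bdd: "bdd_above (F ` {0..})" using Fb by (auto intro!: bdd_aboveI2)
  define L where "L = (SUP b\<in>{0..}. F b)"
  have "L - e < L" using e by simp
  then obtain b0 where b0: "b0 \<in> {0..}" "L - e < F b0"
    unfolding L_def using less_cSUP_iff[OF _ bdd] by fastforce
  have FL: "F b \<le> L" if "0 \<le> b" for b unfolding L_def by (rule cSUP_upper[OF _ bdd]) (use that in auto)
  show ?thesis
  proof (intro exI[of _ b0] conjI allI impI)
    show "0 \<le> b0" using b0 by auto
    fix a b assume ab: "b0 \<le> a" "a \<le> b"
    have "F a = F b0 + integral {b0..a} h" using comb[of b0 a] b0 ab by auto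
    then have "F b0 \<le> F a" using inn[of b0 a] b0 by auto
    moreover have "F b = F a + integral {a..b} h" using comb[of a b] b0 ab by auto
    moreover have "F b \<le> L" using FL[of b] b0 ab by auto
    ultimately show "integral {a..b} h \<le> e" using b0 by linarith
  qed
qed

lemma bootstrap:
  fixes V :: "real \<Rightarrow> real"
  assumes cV: "continuous_on {t0..} V" and V0: "V t0 < B"
    and step: "\<And>b. t0 \<le> b \<Longrightarrow> (\<forall>t\<in>{t0..<b}. V t \<le> B) \<Longrightarrow> V b < B"
  shows "\<forall>t\<ge>t0. V t < B"
proof (rule ccontr)
  assume "\<not> (\<forall>t\<ge>t0. V t < B)"
  then obtain t2 where t2: "t0 \<le> t2" "B \<le> V t2" by auto
  define S where "S = {t0..t2} \<inter> V -` {B..}"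
  have cl: "closed S" unfolding S_def
    by (rule continuous_closed_preimage) (auto intro: continuous_on_subset[OF cV])
  have ne: "S \<noteq> {}" using t2 unfolding S_def by auto
  have bb: "bdd_below S" unfolding S_def by (auto intro: bdd_belowI[of _ t0])
  define t1 where "t1 = Inf S"
  have t1S: "t1 \<in> S" unfolding t1_def by (rule closed_contains_Inf[OF ne bb cl])
  then have t1: "t0 \<le> t1" "t1 \<le> t2" "B \<le> V t1" unfolding S_def by auto
  have "\<forall>t\<in>{t0..<t1}. V t \<le> B"
  proof
    fix t assume t: "t \<in> {t0..<t1}"
    show "V t \<le> B"
    proof (rule ccontr)
      assume "\<not> V t \<le> B"
      then have "t \<in> S" using t t1 unfolding S_def by auto
      then have "t1 \<le> t" unfolding t1_def by (rule cInf_lower[OF _ bb])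
      then show False using t by auto
    qed
  qed
  then have "V t1 < B" using step[OF t1(1)] by blast
  then show False using t1 by simp
qed

lemma weight_ge1:
  assumes "1 \<le> t" "(chi > kap \<longrightarrow> \<xi> > 0)" "(chi \<le> kap \<longrightarrow> \<xi> = 0)"
  shows "1 \<le> exp (\<xi> * (tpow t chi - tpow t kap))"
proof (cases "chi > kap")
  case True
  then have "t powr kap \<le> t powr chi" using assms(1) by (intro powr_mono) auto
  then have "0 \<le> \<xi> * (tpow t chi - tpow t kap)" using True assms unfolding tpow_def by auto
  then show ?thesis by simp
next
  case False
  then show ?thesis using assms by simp
qed

lemma omega2_lt: "omega2 < 1792/1825"
proof -
  have p2: "pi^2 < 16" using pi_less_4 pi_gt3 by (simp add: power_strict_mono[of pi 4 2, simplified])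
  have pp: "0 < pi^2" by simp
  have "pi^4 = pi^2 * pi^2" by (simp add: power2_eq_square power4_eq_xxxx)
  also have "\<dots> < 16 * pi^2" by (rule mult_strict_right_mono[OF p2 pp])
  finally have "33 * pi^4 < 1792 + 1792 * pi^2" using pp by linarith
  moreover have "0 < 1 + pi^2 + pi^4" using pp by (simp add: add_pos_nonneg)
  ultimately show ?thesis unfolding omega2_def by (simp add: divide_less_eq field_simps)
qed


locale sol =
  fixes \<epsilon> f t0 u ux uxx ut uxt uxxt utt
  assumes sol: "is_solution \<epsilon> f t0 u ux uxx ut uxt uxxt utt" and eps: "\<epsilon> > 0"
begin

lemma jc: "continuous_on ({0..1} \<times> {t0..}) (\<lambda>(x, t). u x t)"
  "continuous_on ({0..1} \<times> {t0..}) (\<lambda>(x, t). ux x t)"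
  "continuous_on ({0..1} \<times> {t0..}) (\<lambda>(x, t). uxx x t)"
  "continuous_on ({0..1} \<times> {t0..}) (\<lambda>(x, t). ut x t)"
  "continuous_on ({0..1} \<times> {t0..}) (\<lambda>(x, t). uxt x t)"
  "continuous_on ({0..1} \<times> {t0..}) (\<lambda>(x, t). uxxt x t)"
  "continuous_on ({0..1} \<times> {t0..}) (\<lambda>(x, t). utt x t)"
  using sol unfolding is_solution_def by auto

lemmas jcs = jc[THEN joint_swap]

lemma sc: assumes "t0 \<le> t" shows
  "continuous_on {0..1} (\<lambda>x. u x t)" "continuous_on {0..1} (\<lambda>x. ux x t)"
  "continuous_on {0..1} (\<lambda>x. uxx x t)" "continuous_on {0..1} (\<lambda>x. ut x t)"
  "continuous_on {0..1} (\<lambda>x. uxt x t)" "continuous_on {0..1} (\<lambda>x. uxxt x t)"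
  "continuous_on {0..1} (\<lambda>x. utt x t)"
  using jc[THEN slice_cont, OF assms] by auto

lemma dx: assumes "t0 \<le> t" "x \<in> {0..1}" shows
  "((\<lambda>y. u y t) has_real_derivative ux x t) (at x within {0..1})"
  "((\<lambda>y. ux y t) has_real_derivative uxx x t) (at x within {0..1})"
  "((\<lambda>y. ut y t) has_real_derivative uxt x t) (at x within {0..1})"
  "((\<lambda>y. uxt y t) has_real_derivative uxxt x t) (at x within {0..1})"
  using sol assms unfolding is_solution_def by auto

lemma dt: assumes "t0 \<le> t" "x \<in> {0..1}" shows
  "((\<lambda>s. u x s) has_real_derivative ut x t) (at t within {t0..})"
  "((\<lambda>s. ux x s) has_real_derivative uxt x t) (at t within {t0..})"
  "((\<lambda>s. uxx x s) has_real_derivative uxxt x t) (at t within {t0..})"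
  "((\<lambda>s. ut x s) has_real_derivative utt x t) (at t within {t0..})"
  using sol assms unfolding is_solution_def by auto

lemma bc: assumes "t0 \<le> t" shows "u 0 t = 0" "u 1 t = 0"
  using sol assms unfolding is_solution_def by auto

lemma pde: assumes "x \<in> {0<..<1}" "t0 < t"
  shows "- \<epsilon> * uxxt x t + utt x t - uxx x t = f x t (u x t) (ux x t) (uxx x t) (ut x t)"
  using sol assms unfolding is_solution_def by auto

lemma bct: assumes "t0 < t" "x = 0 \<or> x = 1" shows "ut x t = 0"
proof -
  have x: "x \<in> {0..1}" using assms by auto
  have "((\<lambda>s. u x s) has_real_derivative ut x t) (at t within {t0<..})"
    by (rule has_field_derivative_subset[OF dt(1)[OF _ x]]) (use assms in auto)
  then have d1: "((\<lambda>s. u x s) has_real_derivative ut x t) (at t)"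
    using assms at_within_open[of t "{t0<..}"] by simp
  have "((\<lambda>s. 0) has_real_derivative ut x t) (at t)"
    by (rule has_field_derivative_transform_within_open[OF d1, of "{t0<..}"]) (use assms bc in auto)
  then show ?thesis using DERIV_const DERIV_unique by blast
qed

lemma Vderiv: assumes t: "t0 \<le> t"
  shows "((\<lambda>s. Vfun \<epsilon> (\<lambda>x. ux x s) (\<lambda>x. uxx x s) (\<lambda>x. ut x s)) has_real_derivative
     Dfun \<epsilon> (\<lambda>x. ux x t) (\<lambda>x. uxx x t) (\<lambda>x. ut x t) (\<lambda>x. uxt x t) (\<lambda>x. uxxt x t) (\<lambda>x. utt x t)) (at t within {t0..})"
proof -
  have "((\<lambda>s. integral (cbox 0 1) (\<lambda>x. (ut x s)^2 + (ux x s)^2 + \<epsilon>^2/2 * (uxx x s)^2 - \<epsilon> * (ut x s * uxx x s)))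
     has_field_derivative integral (cbox 0 1) (\<lambda>x. 2 * (ut x t * utt x t) + 2 * (ux x t * uxt x t)
     + \<epsilon>^2/2 * (2 * (uxx x t * uxxt x t)) - \<epsilon> * (utt x t * uxx x t + ut x t * uxxt x t))) (at t within {t0..})"
  proof (rule leibniz_rule_field_derivative)
    fix s x :: real assume s: "s \<in> {t0..}" and x: "x \<in> cbox 0 1"
    then have s': "t0 \<le> s" and x': "x \<in> {0..1}" by (auto simp: cbox_interval)
    show "((\<lambda>s. (ut x s)^2 + (ux x s)^2 + \<epsilon>^2/2 * (uxx x s)^2 - \<epsilon> * (ut x s * uxx x s)) has_field_derivative
       2 * (ut x s * utt x s) + 2 * (ux x s * uxt x s)
     + \<epsilon>^2/2 * (2 * (uxx x s * uxxt x s)) - \<epsilon> * (utt x s * uxx x s + ut x s * uxxt x s)) (at s within {t0..})"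
      using dt[OF s' x'] by (auto intro!: derivative_eq_intros simp: algebra_simps)
  next
    fix s :: real assume s: "s \<in> {t0..}"
    then have s': "t0 \<le> s" by auto
    show "(\<lambda>x. (ut x s)^2 + (ux x s)^2 + \<epsilon>^2/2 * (uxx x s)^2 - \<epsilon> * (ut x s * uxx x s)) integrable_on cbox 0 1"
      unfolding cbox_interval by (intro integrable_continuous_interval continuous_intros sc[OF s'])
  next
    show "continuous_on ({t0..} \<times> cbox 0 1) (\<lambda>(s, x). 2 * (ut x s * utt x s) + 2 * (ux x s * uxt x s)
     + \<epsilon>^2/2 * (2 * (uxx x s * uxxt x s)) - \<epsilon> * (utt x s * uxx x s + ut x s * uxxt x s))"
      unfolding cbox_interval split_beta by (intro continuous_intros jcs)
  qed (use t in auto)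
  then show ?thesis unfolding Vfun_def Dfun_def cbox_interval .
qed


definition "Vt s = Vfun \<epsilon> (\<lambda>x. ux x s) (\<lambda>x. uxx x s) (\<lambda>x. ut x s)"
definition "dd s = dsq (\<lambda>x. u x s) (\<lambda>x. ux x s) (\<lambda>x. uxx x s) (\<lambda>x. ut x s)"

lemma dd_nonneg: assumes "t0 \<le> t" shows "0 \<le> dd t"
  unfolding dd_def dsq_def
  by (rule Henstock_Kurzweil_Integration.integral_nonneg) (auto intro!: integrable_continuous_interval continuous_intros sc[OF assms])

lemma V_low: assumes "t0 \<le> t" shows "28/25 * c1sq \<epsilon> * dd t \<le> Vt t"
  unfolding Vt_def dd_def
  by (rule V_lower[OF eps dx(1)[OF assms] dx(2)[OF assms] sc(3)[OF assms] sc(4)[OF assms] bc[OF assms]])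

lemma V_up: assumes "t0 \<le> t" shows "Vt t \<le> c2sq \<epsilon> * dd t"
  unfolding Vt_def dd_def by (rule V_upper[OF eps sc(1-4)[OF assms]])

lemma V_nonneg: assumes "t0 \<le> t" shows "0 \<le> Vt t"
proof -
  have "0 \<le> 28/25 * c1sq \<epsilon> * dd t" using c1sq_props[OF eps] dd_nonneg[OF assms] by simp
  then show ?thesis using V_low[OF assms] by linarith
qed

lemma V_cont: "continuous_on {t0..} Vt"
  using Vderiv unfolding Vt_def[abs_def]
  by (meson DERIV_continuous atLeast_iff continuous_on_eq_continuous_within)

lemma f_slice_cont:
  assumes fc: "continuous_on UNIV (\<lambda>(x, t, n, p, q, r). f x t n p q r)" and t: "t0 \<le> t"
  shows "continuous_on {0..1} (\<lambda>x. f x t (u x t) (ux x t) (uxx x t) (ut x t))"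
proof -
  have "continuous_on {0..1} (\<lambda>x. (\<lambda>(x, t, n, p, q, r). f x t n p q r) ((\<lambda>x. (x, t, u x t, ux x t, uxx x t, ut x t)) x))"
    by (rule continuous_on_compose2[OF fc]) (auto intro!: continuous_intros sc[OF t])
  then show ?thesis by simp
qed

lemma D_bnd:
  assumes fc: "continuous_on UNIV (\<lambda>(x, t, n, p, q, r). f x t n p q r)" and t: "t0 < t"
  shows "Dfun \<epsilon> (\<lambda>x. ux x t) (\<lambda>x. uxx x t) (\<lambda>x. ut x t) (\<lambda>x. uxt x t) (\<lambda>x. uxxt x t) (\<lambda>x. utt x t)
    \<le> (\<epsilon>/2 + 2/\<epsilon>) * integral {0..1} (\<lambda>x. (f x t (u x t) (ux x t) (uxx x t) (ut x t))^2) - 32*\<epsilon>/73 * dd t"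
  unfolding dd_def
proof (rule D_bound[OF eps])
  have t': "t0 \<le> t" using t by simp
  show "\<And>x. x \<in> {0..1} \<Longrightarrow> ((\<lambda>x. u x t) has_real_derivative ux x t) (at x within {0..1})"
       "\<And>x. x \<in> {0..1} \<Longrightarrow> ((\<lambda>x. ux x t) has_real_derivative uxx x t) (at x within {0..1})"
       "\<And>x. x \<in> {0..1} \<Longrightarrow> ((\<lambda>x. ut x t) has_real_derivative uxt x t) (at x within {0..1})"
       "\<And>x. x \<in> {0..1} \<Longrightarrow> ((\<lambda>x. uxt x t) has_real_derivative uxxt x t) (at x within {0..1})"
    using dx[OF t'] by auto
  show "continuous_on {0..1} (\<lambda>x. uxx x t)" "continuous_on {0..1} (\<lambda>x. uxxt x t)"
    "continuous_on {0..1} (\<lambda>x. utt x t)" using sc[OF t'] by auto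
  show "continuous_on {0..1} (\<lambda>x. f x t (u x t) (ux x t) (uxx x t) (ut x t))" by (rule f_slice_cont[OF fc t'])
  show "u 0 t = 0" "u 1 t = 0" using bc[OF t'] by auto
  show "ut 0 t = 0" "ut 1 t = 0" using bct[OF t] by auto
  show "\<And>x. x \<in> {0<..<1} \<Longrightarrow> utt x t = f x t (u x t) (ux x t) (uxx x t) (ut x t) + \<epsilon> * uxxt x t + uxx x t"
    using pde[OF _ t] by (simp add: algebra_simps)
qed

lemma key_ineq:
  fixes g :: "real \<Rightarrow> real" and g1 g2 :: "real \<Rightarrow> real \<Rightarrow> real"
  assumes fc: "continuous_on UNIV (\<lambda>(x, t, n, p, q, r). f x t n p q r)"
    and f_bound: "\<forall>t\<ge>0. \<forall>\<phi> \<phi>' \<phi>'' \<psi>. in_Gamma \<phi> \<phi>' \<phi>'' \<psi> \<longrightarrow>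
        (\<epsilon>/2 + 2/\<epsilon>) * integral {0..1} (\<lambda>x. (f x t (\<phi> x) (\<phi>' x) (\<phi>'' x) (\<psi> x))^2)
          \<le> g t * c1sq \<epsilon> * dsq \<phi> \<phi>' \<phi>'' \<psi> + g1 t (dsq \<phi> \<phi>' \<phi>'' \<psi>) + g2 t (dsq \<phi> \<phi>' \<phi>'' \<psi>)"
    and g1_nonneg: "\<forall>t\<ge>0. \<forall>\<eta>>0. g1 t \<eta> \<ge> 0"
    and g2_nonneg: "\<forall>t\<ge>0. \<forall>\<eta>>0. g2 t \<eta> \<ge> 0"
    and g1_mono: "\<forall>t\<ge>0. \<forall>a b. 0 < a \<longrightarrow> a \<le> b \<longrightarrow> g1 t a \<le> g1 t b"
    and g2_mono: "\<forall>t\<ge>0. \<forall>a b. 0 < a \<longrightarrow> a \<le> b \<longrightarrow> g2 t a \<le> g2 t b"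
    and gt: "0 \<le> g t"
    and t0: "0 \<le> t0" and t: "t0 < t" and eta: "0 < \<eta>" and Vb: "Vt t \<le> 28/25 * c1sq \<epsilon> * \<eta>"
  shows "\<exists>D. (Vt has_real_derivative D) (at t) \<and>
     D \<le> (g t * (25/28) - 32*\<epsilon>/(73 * c2sq \<epsilon>)) * Vt t + g1 t \<eta> + g2 t \<eta>"
proof -
  have t': "t0 \<le> t" using t by simp
  have tpos: "0 \<le> t" using t0 t by simp
  define D where "D = Dfun \<epsilon> (\<lambda>x. ux x t) (\<lambda>x. uxx x t) (\<lambda>x. ut x t) (\<lambda>x. uxt x t) (\<lambda>x. uxxt x t) (\<lambda>x. utt x t)"
  have dV: "(Vt has_real_derivative D) (at t)"
  proof -
    have "(Vt has_real_derivative D) (at t within {t0<..})"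
      unfolding D_def Vt_def[abs_def] by (rule has_field_derivative_subset[OF Vderiv[OF t']]) auto
    then show ?thesis using t at_within_open[of t "{t0<..}"] by simp
  qed
  have c1: "0 < c1sq \<epsilon>" using c1sq_props[OF eps] by simp
  have c2: "0 < c2sq \<epsilon>" using c2sq_props[of \<epsilon>] eps by linarith
  have g1n: "0 \<le> g1 t \<eta>" "0 \<le> g2 t \<eta>" using g1_nonneg g2_nonneg tpos eta by auto
  show ?thesis
  proof (cases "dd t = 0")
    case True
    then have V0: "Vt t = 0" using V_up[OF t'] V_nonneg[OF t'] by simp
    have "D = 0"
    proof (rule DERIV_local_min[OF dV])
      show "0 < t - t0" using t by simp
      show "\<forall>y. \<bar>t - y\<bar> < t - t0 \<longrightarrow> Vt t \<le> Vt y" using V0 V_nonneg by auto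
    qed
    then show ?thesis using dV V0 g1n by auto
  next
    case False
    then have ddp: "0 < dd t" using dd_nonneg[OF t'] by simp
    have "dd t \<le> \<eta>"
    proof -
      have "28/25 * c1sq \<epsilon> * dd t \<le> 28/25 * c1sq \<epsilon> * \<eta>" using V_low[OF t'] Vb by linarith
      then show ?thesis using c1 by simp
    qed
    have inG: "in_Gamma (\<lambda>x. u x t) (\<lambda>x. ux x t) (\<lambda>x. uxx x t) (\<lambda>x. ut x t)"
      unfolding in_Gamma_def using dx[OF t'] sc[OF t'] bc[OF t'] bct[OF t] by auto
    have fb: "(\<epsilon>/2 + 2/\<epsilon>) * integral {0..1} (\<lambda>x. (f x t (u x t) (ux x t) (uxx x t) (ut x t))^2)
       \<le> g t * c1sq \<epsilon> * dd t + g1 t (dd t) + g2 t (dd t)"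
      using f_bound tpos inG unfolding dd_def by blast
    have m: "g1 t (dd t) \<le> g1 t \<eta>" "g2 t (dd t) \<le> g2 t \<eta>"
      using g1_mono g2_mono tpos ddp \<open>dd t \<le> \<eta>\<close> by auto
    have a1: "g t * c1sq \<epsilon> * dd t \<le> g t * (25/28) * Vt t"
    proof -
      have "c1sq \<epsilon> * dd t \<le> 25/28 * Vt t" using V_low[OF t'] by simp
      then have "g t * (c1sq \<epsilon> * dd t) \<le> g t * (25/28 * Vt t)" using gt by (rule mult_left_mono)
      then show ?thesis by (simp add: algebra_simps)
    qed
    have a2: "32*\<epsilon>/(73 * c2sq \<epsilon>) * Vt t \<le> 32*\<epsilon>/73 * dd t"
    proof -
      have "Vt t / c2sq \<epsilon> \<le> dd t" using V_up[OF t'] c2 by (simp add: divide_le_eq mult.commute)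
      then have "32*\<epsilon>/73 * (Vt t / c2sq \<epsilon>) \<le> 32*\<epsilon>/73 * dd t" using eps by (intro mult_left_mono) auto
      then show ?thesis by simp
    qed
    have "D \<le> (g t * (25/28) - 32*\<epsilon>/(73 * c2sq \<epsilon>)) * Vt t + g1 t \<eta> + g2 t \<eta>"
      using D_bnd[OF fc t] fb m a1 a2 unfolding D_def by (simp add: algebra_simps)
    then show ?thesis using dV by blast
  qed
qed


lemma est:
  fixes k G1 G2 :: "real \<Rightarrow> real"
  assumes key: "\<And>t. t0 < t \<Longrightarrow> Vt t \<le> B \<Longrightarrow> \<exists>D. (Vt has_real_derivative D) (at t) \<and> D \<le> k t * Vt t + G1 t + G2 t"
    and ck: "continuous_on {t0..} k" and cG1: "continuous_on {t0..} G1" and cG2: "continuous_on {t0..} G2"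
    and G1n: "\<And>t. t0 \<le> t \<Longrightarrow> 0 \<le> G1 t" and G2n: "\<And>t. t0 \<le> t \<Longrightarrow> 0 \<le> G2 t"
    and kb: "\<And>\<tau> b. t0 \<le> \<tau> \<Longrightarrow> \<tau> \<le> b \<Longrightarrow> integral {\<tau>..b} k \<le> S - \<delta> * (b - \<tau>)"
    and dpos: "0 < \<delta>"
    and ab: "t0 \<le> a" "a \<le> b" and Vb: "\<forall>t\<in>{a<..<b}. Vt t \<le> B"
    and e1b: "\<forall>t\<in>{a..b}. G1 t \<le> e1" and e2b: "integral {a..b} G2 \<le> e2"
  shows "Vt b \<le> exp S * (exp (-\<delta> * (b - a)) * Vt a + e1 / \<delta> + e2)"
proof (rule ode_est[OF ab(2) dpos])
  show "continuous_on {a..b} Vt" by (rule continuous_on_subset[OF V_cont]) (use ab in auto)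
  show "\<exists>D. (Vt has_real_derivative D) (at t) \<and> D \<le> k t * Vt t + G1 t + G2 t" if "t \<in> {a<..<b}" for t
    using key[of t] that Vb ab by auto
  show "continuous_on {a..b} k" "continuous_on {a..b} G1" "continuous_on {a..b} G2"
    using ab by (auto intro!: continuous_on_subset[OF ck] continuous_on_subset[OF cG1] continuous_on_subset[OF cG2])
  show "\<And>t. t \<in> {a..b} \<Longrightarrow> 0 \<le> G1 t \<and> G1 t \<le> e1" using G1n e1b ab by auto
  show "\<And>t. t \<in> {a..b} \<Longrightarrow> 0 \<le> G2 t" using G2n ab by auto
  show "integral {a..b} G2 \<le> e2" by (rule e2b)
  show "\<And>\<tau>. \<tau> \<in> {a..b} \<Longrightarrow> integral {\<tau>..b} k \<le> S - \<delta> * (b - \<tau>)" using kb ab by auto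
  show "0 \<le> Vt a" using V_nonneg ab by auto
qed

lemma dsol_eq: "dsol u ux uxx ut t = sqrt (dd t)"
  unfolding dsol_def dd_def ..

end

theorem theorem1:
  fixes \<epsilon> :: real
    and f :: "real \<Rightarrow> real \<Rightarrow> real \<Rightarrow> real \<Rightarrow> real \<Rightarrow> real \<Rightarrow> real"
    and g :: "real \<Rightarrow> real"
    and g1 g2 :: "real \<Rightarrow> real \<Rightarrow> real"
  assumes eps: "\<epsilon> > 0"
    and f_cont: "continuous_on UNIV (\<lambda>(x, t, n, p, q, r). f x t n p q r)"
    and g_cont: "continuous_on {0..} g" and g_nonneg: "\<forall>t\<ge>0. g t \<ge> 0"
    and g1_cont: "continuous_on ({0..} \<times> {0<..}) (\<lambda>(t, \<eta>). g1 t \<eta>)"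
    and g2_cont: "continuous_on ({0..} \<times> {0<..}) (\<lambda>(t, \<eta>). g2 t \<eta>)"
    and g1_nonneg: "\<forall>t\<ge>0. \<forall>\<eta>>0. g1 t \<eta> \<ge> 0"
    and g2_nonneg: "\<forall>t\<ge>0. \<forall>\<eta>>0. g2 t \<eta> \<ge> 0"
    and g1_mono: "\<forall>t\<ge>0. \<forall>a b. 0 < a \<longrightarrow> a \<le> b \<longrightarrow> g1 t a \<le> g1 t b"
    and g2_mono: "\<forall>t\<ge>0. \<forall>a b. 0 < a \<longrightarrow> a \<le> b \<longrightarrow> g2 t a \<le> g2 t b"
    and f_bound: "\<forall>t\<ge>0. \<forall>\<phi> \<phi>' \<phi>'' \<psi>. in_Gamma \<phi> \<phi>' \<phi>'' \<psi> \<longrightarrow>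
        (\<epsilon>/2 + 2/\<epsilon>) * integral {0..1} (\<lambda>x. (f x t (\<phi> x) (\<phi>' x) (\<phi>'' x) (\<psi> x))^2)
          \<le> g t * c1sq \<epsilon> * dsq \<phi> \<phi>' \<phi>'' \<psi> + g1 t (dsq \<phi> \<phi>' \<phi>'' \<psi>) + g2 t (dsq \<phi> \<phi>' \<phi>'' \<psi>)"
    and cond_i: "\<exists>\<sigma>>0. \<forall>t0 t. 0 \<le> t0 \<longrightarrow> t0 \<le> t \<longrightarrow>
        integral {t0..t} g - pconst \<epsilon> * (t - t0) \<le> \<sigma>"
    and cond_ii_iii: "\<exists>chi kap q M \<xi>. 0 \<le> chi \<and> chi \<le> 1 \<and> 0 \<le> kap \<and> kap \<le> 1 \<and> q \<ge> 0 \<and>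
        (chi = 1 \<longrightarrow> q < pconst \<epsilon>) \<and> M > 0 \<and>
        (\<forall>t\<ge>0. \<bar>integral {0..t} g / (1 + tpow t chi) - q\<bar> < M / (1 + tpow t kap)) \<and>
        (chi > kap \<longrightarrow> \<xi> > 0) \<and> (chi \<le> kap \<longrightarrow> \<xi> = 0) \<and>
        (\<forall>\<eta>>0. ((\<lambda>t. g1 t \<eta> * exp (\<xi> * (tpow t chi - tpow t kap))) \<longlongrightarrow> 0) at_top \<and>
                (\<lambda>\<tau>. g2 \<tau> \<eta> * exp (\<xi> * (tpow \<tau> chi - tpow \<tau> kap))) integrable_on {0..})"
  shows "eventually_uniformly_bounded \<epsilon> f \<and> eventually_quasi_uniform_asympt_stable_large \<epsilon> f"
proof -
  define c1 where "c1 = c1sq \<epsilon>"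
  define c2 where "c2 = c2sq \<epsilon>"
  define r where "r = 32*\<epsilon>/(73 * c2sq \<epsilon>)"
  define pp where "pp = pconst \<epsilon>"
  define \<delta> where "\<delta> = r - 25/28 * pp"
  obtain \<sigma> where sig: "\<sigma> > 0" "\<forall>t0 t. 0 \<le> t0 \<longrightarrow> t0 \<le> t \<longrightarrow> integral {t0..t} g - pconst \<epsilon> * (t - t0) \<le> \<sigma>"
    using cond_i by blast
  obtain chi kap q M \<xi> where W: "chi > kap \<longrightarrow> \<xi> > 0" "chi \<le> kap \<longrightarrow> \<xi> = 0"
    and iii: "\<forall>\<eta>>0. ((\<lambda>t. g1 t \<eta> * exp (\<xi> * (tpow t chi - tpow t kap))) \<longlongrightarrow> 0) at_top \<and>
                (\<lambda>\<tau>. g2 \<tau> \<eta> * exp (\<xi> * (tpow \<tau> chi - tpow \<tau> kap))) integrable_on {0..}"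
    using cond_ii_iii by blast
  define w where "w t = exp (\<xi> * (tpow t chi - tpow t kap))" for t
  have w1: "1 \<le> w t" if "1 \<le> t" for t unfolding w_def by (rule weight_ge1[OF that W])
  define S where "S = 25/28 * \<sigma>"
  define k where "k t = g t * (25/28) - r" for t
  have c1pos: "0 < c1" unfolding c1_def using c1sq_props[OF eps] by simp
  have c2pos: "0 < c2" unfolding c2_def using c2sq_props[of \<epsilon>] eps by linarith
  have dpos: "0 < \<delta>"
  proof -
    have "\<delta> = \<epsilon> * (32/73 - 25/56 * omega2) / c2"
      using c2pos unfolding \<delta>_def r_def pp_def pconst_def c3sq_def c2_def by (simp add: field_simps)
    moreover have "0 < 32/73 - 25/56 * omega2" using omega2_lt by simp
    ultimately show ?thesis using eps c2pos by simp
  qed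
  have Spos: "0 \<le> S" using sig unfolding S_def by simp
  have gint: "g integrable_on {a..b}" if "0 \<le> a" for a b
    by (rule integrable_continuous_interval, rule continuous_on_subset[OF g_cont]) (use that in auto)
  have kb: "integral {\<tau>..b} k \<le> S - \<delta> * (b - \<tau>)" if "0 \<le> \<tau>" "\<tau> \<le> b" for \<tau> b
  proof -
    have "integral {\<tau>..b} k = integral {\<tau>..b} g * (25/28) - (b - \<tau>) * r"
      unfolding k_def using that gint[of \<tau> b]
      by (subst integral_diff) (auto simp: integral_mult_left content_real)
    moreover have "integral {\<tau>..b} g \<le> \<sigma> + pp * (b - \<tau>)" using sig(2) that unfolding pp_def by force
    then have "integral {\<tau>..b} g * (25/28) \<le> (\<sigma> + pp * (b - \<tau>)) * (25/28)" by (rule mult_right_mono) simp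
    moreover have "(\<sigma> + pp * (b - \<tau>)) * (25/28) - (b - \<tau>) * r = S - \<delta> * (b - \<tau>)"
      unfolding S_def \<delta>_def by (simp add: field_simps)
    ultimately show ?thesis by linarith
  qed
  have ck: "continuous_on {0..} k" unfolding k_def by (intro continuous_intros g_cont)
  have cg1: "continuous_on {0..} (\<lambda>t. g1 t \<eta>)" if "0 < \<eta>" for \<eta>
  proof -
    have "continuous_on {0..} (\<lambda>t. (\<lambda>(t, \<eta>). g1 t \<eta>) ((\<lambda>t. (t, \<eta>)) t))"
      by (rule continuous_on_compose2[OF g1_cont]) (use that in \<open>auto intro!: continuous_intros\<close>)
    then show ?thesis by simp
  qed
  have cg2: "continuous_on {0..} (\<lambda>t. g2 t \<eta>)" if "0 < \<eta>" for \<eta>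
  proof -
    have "continuous_on {0..} (\<lambda>t. (\<lambda>(t, \<eta>). g2 t \<eta>) ((\<lambda>t. (t, \<eta>)) t))"
      by (rule continuous_on_compose2[OF g2_cont]) (use that in \<open>auto intro!: continuous_intros\<close>)
    then show ?thesis by simp
  qed
  have G1: "\<exists>m\<ge>0. \<forall>\<tau>\<ge>m. g1 \<tau> \<eta> \<le> e" if "0 < \<eta>" "0 < e" for \<eta> e
  proof -
    have "((\<lambda>t. g1 t \<eta> * w t) \<longlongrightarrow> 0) at_top" using iii that unfolding w_def by blast
    from order_tendstoD(2)[OF this \<open>0 < e\<close>] obtain N where N: "\<And>t. N \<le> t \<Longrightarrow> g1 t \<eta> * w t < e"
      unfolding eventually_at_top_linorder by blast
    show ?thesis
    proof (intro exI[of _ "max N 1"] conjI allI impI)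
      fix \<tau> assume "max N 1 \<le> \<tau>"
      then have t: "N \<le> \<tau>" "1 \<le> \<tau>" by auto
      have "0 \<le> g1 \<tau> \<eta>" using g1_nonneg t that by auto
      then have "g1 \<tau> \<eta> * 1 \<le> g1 \<tau> \<eta> * w \<tau>" using w1[OF t(2)] by (intro mult_left_mono) auto
      then show "g1 \<tau> \<eta> \<le> e" using N[OF t(1)] by simp
    qed simp
  qed
  have G2: "\<exists>m\<ge>0. \<forall>a b. m \<le> a \<longrightarrow> a \<le> b \<longrightarrow> integral {a..b} (\<lambda>\<tau>. g2 \<tau> \<eta>) \<le> e" if "0 < \<eta>" "0 < e" for \<eta> e
  proof -
    have hi: "(\<lambda>\<tau>. g2 \<tau> \<eta> * w \<tau>) integrable_on {0..}" using iii that unfolding w_def by blast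
    have hn: "0 \<le> g2 \<tau> \<eta> * w \<tau>" if "0 \<le> \<tau>" for \<tau>
      using g2_nonneg that \<open>0 < \<eta>\<close> unfolding w_def by auto
    obtain m where m: "m \<ge> 0" "\<forall>a b. m \<le> a \<longrightarrow> a \<le> b \<longrightarrow> integral {a..b} (\<lambda>\<tau>. g2 \<tau> \<eta> * w \<tau>) \<le> e"
      using tail_small[OF hi hn \<open>0 < e\<close>] by blast
    show ?thesis
    proof (intro exI[of _ "max m 1"] conjI allI impI)
      fix a b assume ab: "max m 1 \<le> a" "a \<le> b"
      have "integral {a..b} (\<lambda>\<tau>. g2 \<tau> \<eta>) \<le> integral {a..b} (\<lambda>\<tau>. g2 \<tau> \<eta> * w \<tau>)"
      proof (rule integral_le)
        show "(\<lambda>\<tau>. g2 \<tau> \<eta>) integrable_on {a..b}"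
          by (rule integrable_continuous_interval, rule continuous_on_subset[OF cg2[OF \<open>0 < \<eta>\<close>]]) (use ab in auto)
        show "(\<lambda>\<tau>. g2 \<tau> \<eta> * w \<tau>) integrable_on {a..b}"
          by (rule integrable_on_subinterval[OF hi]) (use ab in auto)
        fix \<tau> assume "\<tau> \<in> {a..b}"
        then have t: "1 \<le> \<tau>" using ab by auto
        have "0 \<le> g2 \<tau> \<eta>" using g2_nonneg t \<open>0 < \<eta>\<close> by auto
        then have "g2 \<tau> \<eta> * 1 \<le> g2 \<tau> \<eta> * w \<tau>" using w1[OF t] by (intro mult_left_mono) auto
        then show "g2 \<tau> \<eta> \<le> g2 \<tau> \<eta> * w \<tau>" by simp
      qed
      also have "\<dots> \<le> e" using m ab by auto
      finally show "integral {a..b} (\<lambda>\<tau>. g2 \<tau> \<eta>) \<le> e" .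
    qed simp
  qed
  have main: "\<exists>s\<ge>0. \<exists>Bd>0. (\<forall>t0 u ux uxx ut uxt uxxt utt. t0 \<ge> s \<longrightarrow> is_solution \<epsilon> f t0 u ux uxx ut uxt uxxt utt \<longrightarrow>
        dsol u ux uxx ut t0 \<le> \<alpha> \<longrightarrow> (\<forall>t\<ge>t0. dsol u ux uxx ut t < Bd)) \<and>
      (\<forall>\<rho>>0. \<exists>T>0. \<forall>t0 u ux uxx ut uxt uxxt utt.
        t0 \<ge> s \<longrightarrow> is_solution \<epsilon> f t0 u ux uxx ut uxt uxxt utt \<longrightarrow>
        dsol u ux uxx ut t0 \<le> \<alpha> \<longrightarrow> (\<forall>t\<ge>t0 + T. dsol u ux uxx ut t < \<rho>))" if apos: "\<alpha> > 0" for \<alpha>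
  proof -
    define Bnd where "Bnd = exp S * c2 * \<alpha>^2 + 2"
    define \<eta> where "\<eta> = Bnd / (28/25 * c1)"
    have Bpos: "0 < Bnd" unfolding Bnd_def using c2pos by (simp add: add_nonneg_pos)
    have etapos: "0 < \<eta>" unfolding \<eta>_def using Bpos c1pos by simp
    have Beta: "28/25 * c1 * \<eta> = Bnd" unfolding \<eta>_def using c1pos by simp
    define e1 where "e1 = \<delta> / (2 * exp S)"
    define e2 where "e2 = 1 / (2 * exp S)"
    obtain m1 where m1: "m1 \<ge> 0" "\<forall>\<tau>\<ge>m1. g1 \<tau> \<eta> \<le> e1"
      using G1[OF etapos, of e1] dpos unfolding e1_def by auto
    obtain m2 where m2: "m2 \<ge> 0" "\<forall>a b. m2 \<le> a \<longrightarrow> a \<le> b \<longrightarrow> integral {a..b} (\<lambda>\<tau>. g2 \<tau> \<eta>) \<le> e2"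
      using G2[OF etapos, of e2] unfolding e2_def by auto
    define s where "s = max m1 m2"
    have e12: "exp S * (e1 / \<delta> + e2) = 1" unfolding e1_def e2_def using dpos by (simp add: field_simps)
    have per: "(\<forall>t\<ge>t0. Vfun \<epsilon> (\<lambda>x. ux x t) (\<lambda>x. uxx x t) (\<lambda>x. ut x t) < Bnd) \<and>
       (\<forall>t\<ge>t0. 28/25 * c1 * (dsol u ux uxx ut t)^2 \<le> Vfun \<epsilon> (\<lambda>x. ux x t) (\<lambda>x. uxx x t) (\<lambda>x. ut x t)) \<and>
       (\<forall>a b e1' e2'. t0 \<le> a \<longrightarrow> a \<le> b \<longrightarrow> (\<forall>t\<in>{a..b}. g1 t \<eta> \<le> e1') \<longrightarrow> integral {a..b} (\<lambda>t. g2 t \<eta>) \<le> e2' \<longrightarrow>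
          Vfun \<epsilon> (\<lambda>x. ux x b) (\<lambda>x. uxx x b) (\<lambda>x. ut x b) \<le> exp S * (exp (-\<delta> * (b - a)) * Vfun \<epsilon> (\<lambda>x. ux x a) (\<lambda>x. uxx x a) (\<lambda>x. ut x a) + e1' / \<delta> + e2'))"
      if ts: "t0 \<ge> s" and so: "is_solution \<epsilon> f t0 u ux uxx ut uxt uxxt utt" and ia: "dsol u ux uxx ut t0 \<le> \<alpha>"
      for t0 u ux uxx ut uxt uxxt utt
    proof -
      interpret Q: sol \<epsilon> f t0 u ux uxx ut uxt uxxt utt using so eps by unfold_locales
      have t0nn: "0 \<le> t0" using ts m1 m2 unfolding s_def by auto
      have key: "\<exists>D. (Q.Vt has_real_derivative D) (at t) \<and> D \<le> k t * Q.Vt t + g1 t \<eta> + g2 t \<eta>"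
        if "t0 < t" "Q.Vt t \<le> Bnd" for t
      proof -
        have "Q.Vt t \<le> 28/25 * c1sq \<epsilon> * \<eta>" using that Beta unfolding c1_def by simp
        moreover have "0 \<le> g t" using g_nonneg that t0nn by auto
        ultimately show ?thesis
          using Q.key_ineq[OF f_cont f_bound g1_nonneg g2_nonneg g1_mono g2_mono _ t0nn that(1) etapos]
          unfolding k_def r_def by blast
      qed
      have estQ: "Q.Vt b \<le> exp S * (exp (-\<delta> * (b - a)) * Q.Vt a + e1' / \<delta> + e2')"
        if "t0 \<le> a" "a \<le> b" "\<forall>t\<in>{a<..<b}. Q.Vt t \<le> Bnd" "\<forall>t\<in>{a..b}. g1 t \<eta> \<le> e1'"
          "integral {a..b} (\<lambda>t. g2 t \<eta>) \<le> e2'" for a b e1' e2'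
      proof (rule Q.est[OF key _ _ _ _ _ _ dpos that])
        show "continuous_on {t0..} k" "continuous_on {t0..} (\<lambda>t. g1 t \<eta>)" "continuous_on {t0..} (\<lambda>t. g2 t \<eta>)"
          using t0nn by (auto intro!: continuous_on_subset[OF ck] continuous_on_subset[OF cg1[OF etapos]] continuous_on_subset[OF cg2[OF etapos]])
        show "\<And>t. t0 \<le> t \<Longrightarrow> 0 \<le> g1 t \<eta>" "\<And>t. t0 \<le> t \<Longrightarrow> 0 \<le> g2 t \<eta>"
          using g1_nonneg g2_nonneg t0nn etapos by auto
        show "\<And>\<tau> b. t0 \<le> \<tau> \<Longrightarrow> \<tau> \<le> b \<Longrightarrow> integral {\<tau>..b} k \<le> S - \<delta> * (b - \<tau>)"
          using kb t0nn by auto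
      qed auto
      have eS: "1 \<le> exp S" using Spos by simp
      have VC: "Q.Vt t0 \<le> c2 * \<alpha>^2"
      proof -
        have "Q.dd t0 \<le> \<alpha>^2"
        proof -
          have "sqrt (Q.dd t0) \<le> \<alpha>" using ia Q.dsol_eq by simp
          then have "(sqrt (Q.dd t0))^2 \<le> \<alpha>^2" using Q.dd_nonneg[of t0] by (intro power_mono) auto
          then show ?thesis using Q.dd_nonneg[of t0] by simp
        qed
        then have "c2 * Q.dd t0 \<le> c2 * \<alpha>^2" using c2pos by (intro mult_left_mono) auto
        then show ?thesis using Q.V_up[of t0] unfolding c2_def by simp
      qed
      have VC2: "exp S * Q.Vt t0 \<le> exp S * (c2 * \<alpha>^2)" using VC by (intro mult_left_mono) auto
      have "1 * (c2 * \<alpha>^2) \<le> exp S * (c2 * \<alpha>^2)" using eS c2pos by (intro mult_right_mono) auto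
      then have V0: "Q.Vt t0 < Bnd" using VC unfolding Bnd_def by simp
      have bnd: "\<forall>t\<ge>t0. Q.Vt t < Bnd"
      proof (rule bootstrap[OF Q.V_cont V0])
        fix b assume b: "t0 \<le> b" "\<forall>t\<in>{t0..<b}. Q.Vt t \<le> Bnd"
        have "Q.Vt b \<le> exp S * (exp (-\<delta> * (b - t0)) * Q.Vt t0 + e1 / \<delta> + e2)"
          using b m1 m2 ts unfolding s_def by (intro estQ) auto
        also have "\<dots> \<le> exp S * (1 * Q.Vt t0 + e1 / \<delta> + e2)"
          using b dpos Q.V_nonneg[of t0] by (intro mult_left_mono add_right_mono mult_right_mono) auto
        also have "\<dots> = exp S * Q.Vt t0 + 1" using e12 by (simp add: algebra_simps)
        also have "\<dots> \<le> exp S * (c2 * \<alpha>^2) + 1" using VC2 by simp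
        also have "\<dots> < Bnd" unfolding Bnd_def by simp
        finally show "Q.Vt b < Bnd" .
      qed
      have c1': "\<forall>t\<ge>t0. Vfun \<epsilon> (\<lambda>x. ux x t) (\<lambda>x. uxx x t) (\<lambda>x. ut x t) < Bnd"
        using bnd by (simp add: Q.Vt_def)
      have c2': "\<forall>t\<ge>t0. 28/25 * c1 * (dsol u ux uxx ut t)^2 \<le> Vfun \<epsilon> (\<lambda>x. ux x t) (\<lambda>x. uxx x t) (\<lambda>x. ut x t)"
      proof (intro allI impI)
        fix t assume t: "t0 \<le> t"
        have "(dsol u ux uxx ut t)^2 = Q.dd t" using Q.dsol_eq Q.dd_nonneg[OF t] by simp
        then show "28/25 * c1 * (dsol u ux uxx ut t)^2 \<le> Vfun \<epsilon> (\<lambda>x. ux x t) (\<lambda>x. uxx x t) (\<lambda>x. ut x t)"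
          using Q.V_low[OF t] unfolding c1_def Q.Vt_def by simp
      qed
      have c3': "\<forall>a b e1' e2'. t0 \<le> a \<longrightarrow> a \<le> b \<longrightarrow> (\<forall>t\<in>{a..b}. g1 t \<eta> \<le> e1') \<longrightarrow> integral {a..b} (\<lambda>t. g2 t \<eta>) \<le> e2' \<longrightarrow>
          Vfun \<epsilon> (\<lambda>x. ux x b) (\<lambda>x. uxx x b) (\<lambda>x. ut x b) \<le> exp S * (exp (-\<delta> * (b - a)) * Vfun \<epsilon> (\<lambda>x. ux x a) (\<lambda>x. uxx x a) (\<lambda>x. ut x a) + e1' / \<delta> + e2')"
      proof (intro allI impI)
        fix a b e1' e2' assume h: "t0 \<le> a" "a \<le> b" "\<forall>t\<in>{a..b}. g1 t \<eta> \<le> e1'" "integral {a..b} (\<lambda>t. g2 t \<eta>) \<le> e2'"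
        have "\<forall>t\<in>{a<..<b}. Q.Vt t \<le> Bnd" using bnd h(1) by (auto intro: less_imp_le)
        from estQ[OF h(1,2) this h(3,4)]
        show "Vfun \<epsilon> (\<lambda>x. ux x b) (\<lambda>x. uxx x b) (\<lambda>x. ut x b) \<le> exp S * (exp (-\<delta> * (b - a)) * Vfun \<epsilon> (\<lambda>x. ux x a) (\<lambda>x. uxx x a) (\<lambda>x. ut x a) + e1' / \<delta> + e2')"
          by (simp add: Q.Vt_def)
      qed
      show ?thesis using c1' c2' c3' by blast
    qed
    have s0: "0 \<le> s" using m1 unfolding s_def by simp
    show ?thesis
      apply (rule exI[of _ s], rule conjI[OF s0], rule exI[of _ "sqrt \<eta>"])
    proof (intro conjI allI impI)
      show "0 < sqrt \<eta>" using etapos by simp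
    next
      fix t0 u ux uxx ut uxt uxxt utt t
      assume h: "s \<le> t0" "is_solution \<epsilon> f t0 u ux uxx ut uxt uxxt utt" "dsol u ux uxx ut t0 \<le> \<alpha>" "t0 \<le> t"
      note P = per[OF h(1-3)]
      have "28/25 * c1 * (dsol u ux uxx ut t)^2 < 28/25 * c1 * \<eta>" using P h(4) Beta by force
      then have "(dsol u ux uxx ut t)^2 < \<eta>" using c1pos by simp
      then show "dsol u ux uxx ut t < sqrt \<eta>" by (rule real_less_rsqrt)
    next
      fix \<rho> :: real assume rho: "0 < \<rho>"
      define \<rho>' where "\<rho>' = 28/25 * c1 * \<rho>^2"
      have rho': "0 < \<rho>'" unfolding \<rho>'_def using rho c1pos by simp
      define e1' where "e1' = \<delta> * \<rho>' / (4 * exp S)"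
      define e2' where "e2' = \<rho>' / (4 * exp S)"
      obtain m1' where m1': "m1' \<ge> 0" "\<forall>\<tau>\<ge>m1'. g1 \<tau> \<eta> \<le> e1'"
        using G1[OF etapos, of e1'] dpos rho' unfolding e1'_def by auto
      obtain m2' where m2': "m2' \<ge> 0" "\<forall>a b. m2' \<le> a \<longrightarrow> a \<le> b \<longrightarrow> integral {a..b} (\<lambda>\<tau>. g2 \<tau> \<eta>) \<le> e2'"
        using G2[OF etapos, of e2'] rho' unfolding e2'_def by auto
      define X where "X = 4 * exp S * Bnd / \<rho>'"
      have Xpos: "0 < X" unfolding X_def using Bpos rho' by simp
      define h where "h = max (max m1' m2') (max 1 (ln X / \<delta>))"
      have hpos: "0 < h" unfolding h_def by simp
      have e12': "exp S * (e1' / \<delta> + e2') = \<rho>' / 2" unfolding e1'_def e2'_def using dpos by (simp add: field_simps)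
      have eh: "exp (-\<delta> * h) \<le> 1 / X"
      proof -
        have "ln X / \<delta> \<le> h" unfolding h_def by simp
        then have "ln X \<le> \<delta> * h" using dpos by (simp add: divide_le_eq mult.commute)
        then have "exp (-\<delta> * h) \<le> exp (- ln X)" by simp
        also have "\<dots> = 1 / X" using Xpos by (simp add: exp_minus inverse_eq_divide)
        finally show ?thesis .
      qed
      show "\<exists>T>0. \<forall>t0 u ux uxx ut uxt uxxt utt. s \<le> t0 \<longrightarrow> is_solution \<epsilon> f t0 u ux uxx ut uxt uxxt utt \<longrightarrow>
          dsol u ux uxx ut t0 \<le> \<alpha> \<longrightarrow> (\<forall>t\<ge>t0 + T. dsol u ux uxx ut t < \<rho>)"
      proof (intro exI[of _ "2 * h"] conjI allI impI)
        show "0 < 2 * h" using hpos by simp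
        fix t0 u ux uxx ut uxt uxxt utt t
        assume hh: "s \<le> t0" "is_solution \<epsilon> f t0 u ux uxx ut uxt uxxt utt" "dsol u ux uxx ut t0 \<le> \<alpha>" "t0 + 2 * h \<le> t"
        note P = per[OF hh(1-3)]
        define V where "V t = Vfun \<epsilon> (\<lambda>x. ux x t) (\<lambda>x. uxx x t) (\<lambda>x. ut x t)" for t
        define a where "a = t - h"
        have t0nn: "0 \<le> t0" using hh(1) s0 by simp
        have a1: "t0 \<le> a" "a \<le> t" "t - a = h" using hh(4) hpos unfolding a_def by auto
        have a2: "m1' \<le> a" "m2' \<le> a" using hh(4) t0nn unfolding a_def h_def by auto
        have "V t \<le> exp S * (exp (-\<delta> * (t - a)) * V a + e1' / \<delta> + e2')"
          using P a1 a2 m1'(2) m2'(2) unfolding V_def by (meson atLeastAtMost_iff order_trans)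
        also have "\<dots> = exp S * exp (-\<delta> * h) * V a + \<rho>' / 2"
          using e12' a1(3) by (simp add: algebra_simps)
        also have "exp S * exp (-\<delta> * h) * V a \<le> exp S * (1 / X) * Bnd"
        proof -
          have Va: "0 \<le> V a" "V a \<le> Bnd"
          proof -
            have "0 \<le> 28/25 * c1 * (dsol u ux uxx ut a)^2" using c1pos by simp
            then show "0 \<le> V a" using P a1 unfolding V_def by (meson order_trans)
            show "V a \<le> Bnd" using P a1 unfolding V_def by (simp add: less_imp_le)
          qed
          show ?thesis using eh Va Xpos by (intro mult_mono mult_left_mono) auto
        qed
        also have "exp S * (1 / X) * Bnd = \<rho>' / 4" unfolding X_def using Bpos rho' by (simp add: field_simps)
        finally have "V t < \<rho>'" using rho' by simp
        moreover have "28/25 * c1 * (dsol u ux uxx ut t)^2 \<le> V t"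
          using P a1 unfolding V_def by auto
        ultimately have "28/25 * c1 * (dsol u ux uxx ut t)^2 < 28/25 * c1 * \<rho>^2"
          unfolding \<rho>'_def by linarith
        then have "(dsol u ux uxx ut t)^2 < \<rho>^2" using c1pos by simp
        then show "dsol u ux uxx ut t < \<rho>"
          by (rule power_less_imp_less_base[OF _ less_imp_le[OF rho]])
      qed
    qed
  qed
  show ?thesis
  proof
    show "eventually_uniformly_bounded \<epsilon> f" unfolding eventually_uniformly_bounded_def
    proof (intro allI impI)
      fix \<alpha> :: real assume "0 < \<alpha>"
      from main[OF this] show "\<exists>s\<ge>0. \<exists>\<beta>>0. \<forall>t0 u ux uxx ut uxt uxxt utt. t0 \<ge> s \<longrightarrow> is_solution \<epsilon> f t0 u ux uxx ut uxt uxxt utt \<longrightarrow>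
        dsol u ux uxx ut t0 \<le> \<alpha> \<longrightarrow> (\<forall>t\<ge>t0. dsol u ux uxx ut t < \<beta>)"
        apply (elim exE conjE)
        apply (rule exI, rule conjI, assumption)
        apply (rule exI, rule conjI, assumption)
        apply assumption
        done
    qed
    show "eventually_quasi_uniform_asympt_stable_large \<epsilon> f" unfolding eventually_quasi_uniform_asympt_stable_large_def
    proof (intro allI impI)
      fix \<alpha> :: real assume "0 < \<alpha>"
      from main[OF this] show "\<exists>s\<ge>0. \<forall>\<rho>>0. \<exists>T>0. \<forall>t0 u ux uxx ut uxt uxxt utt.
        t0 \<ge> s \<longrightarrow> is_solution \<epsilon> f t0 u ux uxx ut uxt uxxt utt \<longrightarrow>
        dsol u ux uxx ut t0 \<le> \<alpha> \<longrightarrow> (\<forall>t\<ge>t0 + T. dsol u ux uxx ut t < \<rho>)"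
        apply (elim exE conjE)
        apply (rule exI, rule conjI, assumption)
        apply assumption
        done
    qed
  qed
qed

end
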